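(* Let $K=\mathbb{F}_q$, $S=K[t_1,\ldots,t_s]$, and let $\mathcal{X}=[A_1\times\cdots\times A_s]\subset\mathbb{P}^{s-1}$ be a projective nested cartesian set with $d_i=|A_i|$. Let $\mathcal{L}_d$ be the $K$-vector space spanned by all monomials $t^a\in S_d$ divisible by $t_1$. If $1\leq d\leq\sum_{i=2}^s(d_i-1)$, then $$\max\{|V_{\mathcal{X}}(f)|: f\in\mathcal{L}_d,\ f\notin I(\mathcal{X})\}=\deg(S/I(\mathcal{X}))-(d_{k+2}-\ell+1)d_{k+3}\cdots d_s,$$ where $0\leq k\leq s-2$ and $\ell$ are the integers with $d=\sum_{i=2}^{k+1}(d_i-1)+\ell$ and $1\leq\ell\leq d_{k+2}-1$.
   Context: Projective nested cartesian set: for subsets $A_1,\ldots,A_s$ of $K$, $\mathcal{X}=[A_1\times\cdots\times A_s]$ is the image of $(A_1\times\cdots\times A_s)\setminus\{0\}$ under $K^s\setminus\{0\}\to\mathbb{P}^{s-1}$, $x\mapsto[x]$, and it is required that (i) $\{0,1\}\subset A_i$ for all $i$; (ii) $a/b\in A_j$ whenever $1\leq i<j\leq s$, $a\in A_j$, $0\neq b\in A_i$; (iii) $d_1\leq\cdots\leq d_s$ where $d_i=|A_i|$. $I(\mathcal{X})$ is the ideal generated by the homogeneous polynomials vanishing on $\mathcal{X}$; $V_{\mathcal{X}}(f)$ is the zero set of $f$ in $\mathcal{X}$. For a graded ideal $J$ with Hilbert function $H_J(d)=\dim_K(S_d/J_d)$ and $k=\dim(S/J)$, $\deg(S/J)=(k-1)!\lim_{d\to\infty}H_J(d)/d^{k-1}$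 if $k\geq1$ and $\dim_K(S/J)$ if $k=0$. *)

theory Defs
  imports "HOL-Analysis.Analysis" "HOL-Library.Function_Algebras"
begin

text \<open>Variables t_1,...,t_s are indexed 0,...,s-1 (t_1 is index 0).
  Monomials t^a are exponent vectors a :: nat => nat supported on {..<s};
  a homogeneous polynomial of degree d is its coefficient function, supported
  on the monomials of degree d.  Points of K^s are vectors nat => K supported on {..<s}.\<close>

definition exps_deg :: "nat \<Rightarrow> nat \<Rightarrow> (nat \<Rightarrow> nat) set" where
  "exps_deg s d = {a. (\<forall>i\<ge>s. a i = 0) \<and> (\<Sum>i<s. a i) = d}"

definition hpolys :: "nat \<Rightarrow> nat \<Rightarrow> ((nat \<Rightarrow> nat) \<Rightarrow> 'a::field) set" where
  "hpolys s d = {c. \<forall>a. a \<notin> exps_deg s d \<longrightarrow> c a = 0}"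

definition peval :: "nat \<Rightarrow> nat \<Rightarrow> ((nat \<Rightarrow> nat) \<Rightarrow> 'a::field) \<Rightarrow> (nat \<Rightarrow> 'a) \<Rightarrow> 'a" where
  "peval s d c x = (\<Sum>a\<in>exps_deg s d. c a * (\<Prod>i<s. x i ^ a i))"

definition Lspace :: "nat \<Rightarrow> nat \<Rightarrow> ((nat \<Rightarrow> nat) \<Rightarrow> 'a::field) set" where
  "Lspace s d = {c \<in> hpolys s d. \<forall>a. c a \<noteq> 0 \<longrightarrow> 1 \<le> a 0}"

definition projpt :: "(nat \<Rightarrow> 'a::field) \<Rightarrow> (nat \<Rightarrow> 'a) set" where
  "projpt x = {(\<lambda>i. c * x i) | c. c \<noteq> 0}"

definition proj_cart :: "nat \<Rightarrow> (nat \<Rightarrow> 'a::field set) \<Rightarrow> (nat \<Rightarrow> 'a) set set" where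
  "proj_cart s A = {projpt x | x. (\<forall>i<s. x i \<in> A i) \<and> (\<forall>i\<ge>s. x i = 0) \<and> (\<exists>i<s. x i \<noteq> 0)}"

definition proj_nested :: "nat \<Rightarrow> (nat \<Rightarrow> 'a::field set) \<Rightarrow> bool" where
  "proj_nested s A \<longleftrightarrow>
     (\<forall>i<s. {0, 1} \<subseteq> A i) \<and>
     (\<forall>i j a b. i < j \<and> j < s \<and> a \<in> A j \<and> b \<in> A i \<and> b \<noteq> 0 \<longrightarrow> a / b \<in> A j) \<and>
     (\<forall>i j. i \<le> j \<and> j < s \<longrightarrow> card (A i) \<le> card (A j))"

definition zero_set :: "nat \<Rightarrow> nat \<Rightarrow> (nat \<Rightarrow> 'a::field) set set \<Rightarrow> ((nat \<Rightarrow> nat) \<Rightarrow> 'a) \<Rightarrow> (nat \<Rightarrow> 'a) set set" where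
  "zero_set s d X f = {P \<in> X. \<forall>x\<in>P. peval s d f x = 0}"

text \<open>I(X)_d : the degree-d part of the vanishing ideal I(X) (generated by the
  homogeneous polynomials vanishing on X), i.e. the degree-d forms vanishing on X.\<close>
definition vanishing_ideal_hom :: "nat \<Rightarrow> nat \<Rightarrow> (nat \<Rightarrow> 'a::field) set set \<Rightarrow> ((nat \<Rightarrow> nat) \<Rightarrow> 'a) set" where
  "vanishing_ideal_hom s d X = {f \<in> hpolys s d. \<forall>P\<in>X. \<forall>x\<in>P. peval s d f x = 0}"

definition hilbert_fn :: "nat \<Rightarrow> (nat \<Rightarrow> 'a::field) set set \<Rightarrow> nat \<Rightarrow> nat" where
  "hilbert_fn s X d =
     vector_space.dim (\<lambda>(c::'a) f. \<lambda>a. c * f a) (hpolys s d)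
   - vector_space.dim (\<lambda>(c::'a) f. \<lambda>a. c * f a) (vanishing_ideal_hom s d X)"

text \<open>Degree from the Hilbert function: if H is eventually 0 (k = 0) it is the total
  dimension sum H; otherwise with e = k-1 the growth exponent of H (the unique e with
  H(d)/d^e tending to a positive limit), it is e! * lim H(d)/d^e.\<close>
definition hdeg :: "(nat \<Rightarrow> nat) \<Rightarrow> real" where
  "hdeg H = (if eventually (\<lambda>d. H d = 0) sequentially
     then real (\<Sum>d\<in>{d. H d \<noteq> 0}. H d)
     else (let e = (THE e. \<exists>L>0. (\<lambda>d. real (H d) / real d ^ e) \<longlonglongrightarrow> L)
           in fact e * lim (\<lambda>d. real (H d) / real d ^ e)))"

end

theory Submission
  imports Defs "HOL-Computational_Algebra.Polynomial"
begin


lemma finite_exps_deg: "finite (exps_deg s d)"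
proof -
  have "exps_deg s d \<subseteq> (\<lambda>f i. if i < s then f i else 0) ` ({..<s} \<rightarrow>\<^sub>E {..d})"
  proof
    fix a assume a: "a \<in> exps_deg s d"
    have le: "a i \<le> d" if "i < s" for i
      using a that member_le_sum[of i "{..<s}" a] by (auto simp: exps_deg_def)
    show "a \<in> (\<lambda>f i. if i < s then f i else 0) ` ({..<s} \<rightarrow>\<^sub>E {..d})"
      by (rule image_eqI[where x="restrict a {..<s}"]) (use a le in \<open>auto simp: exps_deg_def fun_eq_iff\<close>)
  qed
  then show ?thesis by (rule finite_subset) (intro finite_imageI finite_PiE, auto)
qed

lemma peval_add: "peval s d (\<lambda>a. f a + g a) x = peval s d f x + peval s d g x"
  by (simp add: peval_def distrib_right sum.distrib)

lemma peval_scale: "peval s d (\<lambda>a. k * f a) x = k * peval s d f x"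
  by (simp add: peval_def sum_distrib_left mult.assoc)

lemma peval_homog: "peval s d c (\<lambda>i. k * x i) = k ^ d * peval s d c x"
  unfolding peval_def sum_distrib_left
proof (rule sum.cong[OF refl])
  fix a assume a: "a \<in> exps_deg s d"
  have "(\<Prod>i<s. (k * x i) ^ a i) = k ^ (\<Sum>i<s. a i) * (\<Prod>i<s. x i ^ a i)"
    by (simp add: power_mult_distrib prod.distrib power_sum)
  then show "c a * (\<Prod>i<s. (k * x i) ^ a i) = k ^ d * (c a * (\<Prod>i<s. x i ^ a i))"
    using a by (simp add: exps_deg_def)
qed

lemma sum_upd: "finite S \<Longrightarrow> i \<in> S \<Longrightarrow> (\<Sum>j\<in>S. (g(i:=v)) j) = v + (\<Sum>j\<in>S-{i}. g j)"
  by (simp add: sum.remove[of S i])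

lemma prod_upd: "finite S \<Longrightarrow> i \<in> S \<Longrightarrow> (\<Prod>j\<in>S. h j ((g(i:=v)) j)) = h i v * (\<Prod>j\<in>S-{i}. h j (g j))"
  by (simp add: prod.remove[of S i])

definition mul_lin :: "nat \<Rightarrow> (nat \<Rightarrow> 'a::field) \<Rightarrow> ((nat\<Rightarrow>nat) \<Rightarrow> 'a) \<Rightarrow> (nat\<Rightarrow>nat) \<Rightarrow> 'a" where
  "mul_lin s L c = (\<lambda>a. \<Sum>i<s. if 1 \<le> a i then L i * c (a(i := a i - 1)) else 0)"

definition lin :: "nat \<Rightarrow> (nat \<Rightarrow> 'a::field) \<Rightarrow> (nat \<Rightarrow> 'a) \<Rightarrow> 'a" where
  "lin s L x = (\<Sum>i<s. L i * x i)"

lemma exps_dec: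
  assumes "i < s" "1 \<le> a i" "a(i := a i - 1) \<in> exps_deg s d"
  shows "a \<in> exps_deg s (Suc d)"
proof -
  have sup: "\<forall>j\<ge>s. a j = 0" using assms by (auto simp: exps_deg_def split: if_splits)
  have "(\<Sum>j<s. (a(i := a i - 1)) j) = d" using assms by (simp add: exps_deg_def)
  then have "a i - 1 + (\<Sum>j\<in>{..<s}-{i}. a j) = d" using assms sum_upd[of "{..<s}" i a "a i - 1"] by simp
  moreover have "(\<Sum>j<s. a j) = a i + (\<Sum>j\<in>{..<s}-{i}. a j)" using assms by (simp add: sum.remove)
  ultimately show ?thesis using sup assms by (simp add: exps_deg_def)
qed

lemma exps_dec_inv:
  assumes "i < s" "1 \<le> a i" "a \<in> exps_deg s (Suc d)"
  shows "a(i := a i - 1) \<in> exps_deg s d"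
proof -
  have "(\<Sum>j<s. (a(i := a i - 1)) j) = a i - 1 + (\<Sum>j\<in>{..<s}-{i}. a j)" using assms sum_upd[of "{..<s}" i a "a i - 1"] by simp
  moreover have "(\<Sum>j<s. a j) = a i + (\<Sum>j\<in>{..<s}-{i}. a j)" using assms by (simp add: sum.remove)
  ultimately show ?thesis using assms by (auto simp: exps_deg_def)
qed

lemma exps_inc:
  assumes "i < s" "b \<in> exps_deg s d"
  shows "b(i := Suc (b i)) \<in> exps_deg s (Suc d)"
proof -
  have "(\<Sum>j<s. (b(i := Suc (b i))) j) = Suc (b i) + (\<Sum>j\<in>{..<s}-{i}. b j)" using assms sum_upd[of "{..<s}" i b "Suc (b i)"] by simp
  moreover have "(\<Sum>j<s. b j) = b i + (\<Sum>j\<in>{..<s}-{i}. b j)" using assms by (simp add: sum.remove)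
  ultimately show ?thesis using assms by (auto simp: exps_deg_def)
qed

lemma mul_lin_hpolys: "c \<in> hpolys s d \<Longrightarrow> mul_lin s L c \<in> hpolys s (Suc d)"
  unfolding hpolys_def mul_lin_def
proof (safe)
  fix a assume c: "\<forall>a. a \<notin> exps_deg s d \<longrightarrow> c a = 0" and a: "a \<notin> exps_deg s (Suc d)"
  show "(\<Sum>i<s. if 1 \<le> a i then L i * c (a(i := a i - 1)) else 0) = 0"
  proof (rule sum.neutral, safe)
    fix i assume "i < s"
    then show "(if 1 \<le> a i then L i * c (a(i := a i - 1)) else 0) = 0"
      using c a exps_dec[of i s a d] by auto
  qed
qed

lemma mul_lin_nz:
  assumes "mul_lin s L c a \<noteq> 0"
  obtains i where "i < s" "1 \<le> a i" "L i \<noteq> 0" "c (a(i := a i - 1)) \<noteq> 0"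
proof -
  from assms obtain i where i: "i \<in> {..<s}" "(if 1 \<le> a i then L i * c (a(i := a i - 1)) else 0) \<noteq> 0"
    unfolding mul_lin_def using sum.not_neutral_contains_not_neutral by blast
  then show ?thesis using that by (auto split: if_splits)
qed

lemma mul_lin_Lspace: "c \<in> Lspace s d \<Longrightarrow> mul_lin s L c \<in> Lspace s (Suc d)"
  unfolding Lspace_def
proof (safe)
  assume "c \<in> hpolys s d" then show "mul_lin s L c \<in> hpolys s (Suc d)" by (rule mul_lin_hpolys)
next
  fix a assume c: "\<forall>a. c a \<noteq> 0 \<longrightarrow> 1 \<le> a 0" and ne: "mul_lin s L c a \<noteq> 0"
  obtain i where i: "i < s" "1 \<le> a i" "c (a(i := a i - 1)) \<noteq> 0"
    using mul_lin_nz[OF ne] by blast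
  then have "1 \<le> (a(i := a i - 1)) 0" using c by blast
  then show "1 \<le> a 0" by (cases "i = 0") auto
qed

lemma mul_lin_Lspace0:
  assumes "c \<in> hpolys s d" "\<And>i. i \<noteq> 0 \<Longrightarrow> L i = 0"
  shows "mul_lin s L c \<in> Lspace s (Suc d)"
  unfolding Lspace_def
proof (safe)
  show "mul_lin s L c \<in> hpolys s (Suc d)" using assms(1) by (rule mul_lin_hpolys)
next
  fix a assume ne: "mul_lin s L c a \<noteq> 0"
  obtain i where i: "i < s" "1 \<le> a i" "L i \<noteq> 0"
    using mul_lin_nz[OF ne] by blast
  then show "1 \<le> a 0" using assms(2) by (cases "i = 0") auto
qed

lemma peval_mul_lin:
  assumes c: "c \<in> hpolys s d"
  shows "peval s (Suc d) (mul_lin s L c) x = lin s L x * peval s d c x"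
proof -
  have "peval s (Suc d) (mul_lin s L c) x =
     (\<Sum>i<s. \<Sum>a\<in>exps_deg s (Suc d). (if 1 \<le> a i then L i * c (a(i := a i - 1)) else 0) * (\<Prod>j<s. x j ^ a j))"
    unfolding peval_def mul_lin_def sum_distrib_right by (rule sum.swap)
  also have "\<dots> = (\<Sum>i<s. L i * x i * peval s d c x)"
  proof (rule sum.cong[OF refl])
    fix i assume i: "i \<in> {..<s}"
    have "(\<Sum>a\<in>exps_deg s (Suc d). (if 1 \<le> a i then L i * c (a(i := a i - 1)) else 0) * (\<Prod>j<s. x j ^ a j))
       = (\<Sum>a\<in>exps_deg s (Suc d). if 1 \<le> a i then L i * c (a(i := a i - 1)) * (\<Prod>j<s. x j ^ a j) else 0)"
      by (rule sum.cong) auto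
    also have "\<dots> = (\<Sum>a\<in>{a\<in>exps_deg s (Suc d). 1 \<le> a i}. L i * c (a(i := a i - 1)) * (\<Prod>j<s. x j ^ a j))"
      by (rule sum.inter_filter[OF finite_exps_deg, symmetric])
    also have "\<dots> = (\<Sum>b\<in>exps_deg s d. L i * x i * (c b * (\<Prod>j<s. x j ^ b j)))"
    proof (rule sum.reindex_bij_witness[where i="\<lambda>b. b(i := Suc (b i))" and j="\<lambda>a. a(i := a i - 1)"])
      fix a assume a: "a \<in> {a\<in>exps_deg s (Suc d). 1 \<le> a i}"
      then show "(a(i := a i - 1))(i := Suc ((a(i := a i - 1)) i)) = a" by auto
      show "a(i := a i - 1) \<in> exps_deg s d" using exps_dec_inv[of i s a d] a i by auto
      have "(\<Prod>j<s. x j ^ a j) = x i * (\<Prod>j<s. x j ^ (a(i := a i - 1)) j)"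
      proof -
        have "(\<Prod>j<s. x j ^ a j) = x i ^ a i * (\<Prod>j\<in>{..<s}-{i}. x j ^ a j)"
          using i by (simp add: prod.remove)
        moreover have "(\<Prod>j<s. x j ^ (a(i := a i - 1)) j) = x i ^ (a i - 1) * (\<Prod>j\<in>{..<s}-{i}. x j ^ a j)"
          using i prod_upd[of "{..<s}" i "\<lambda>j e. x j ^ e" a "a i - 1"] by simp
        moreover have "x i ^ a i = x i * x i ^ (a i - 1)" using a
          by (metis (mono_tags, lifting) Suc_diff_le diff_Suc_1 mem_Collect_eq power_Suc)
        ultimately show ?thesis by simp
      qed
      then show "L i * x i * (c (a(i := a i - 1)) * (\<Prod>j<s. x j ^ (a(i := a i - 1)) j)) =
          L i * c (a(i := a i - 1)) * (\<Prod>j<s. x j ^ a j)"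
        by (simp add: mult_ac)
    next
      fix b assume b: "b \<in> exps_deg s d"
      show "(b(i := Suc (b i)))(i := (b(i := Suc (b i))) i - 1) = b" by auto
      show "b(i := Suc (b i)) \<in> {a\<in>exps_deg s (Suc d). 1 \<le> a i}"
        using exps_inc[of i s b d] b i by auto
    qed
    also have "\<dots> = L i * x i * peval s d c x"
      by (simp add: peval_def sum_distrib_left)
    finally show "(\<Sum>a\<in>exps_deg s (Suc d). (if 1 \<le> a i then L i * c (a(i := a i - 1)) else 0) * (\<Prod>j<s. x j ^ a j))
       = L i * x i * peval s d c x" .
  qed
  also have "\<dots> = lin s L x * peval s d c x"
    by (simp add: lin_def sum_distrib_right)
  finally show ?thesis .
qed


definition HP :: "nat \<Rightarrow> nat \<Rightarrow> ((nat \<Rightarrow> 'a::field) \<Rightarrow> 'a) \<Rightarrow> bool" where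
  "HP s n \<phi> \<longleftrightarrow> (\<exists>c\<in>hpolys s n. \<forall>x. \<phi> x = peval s n c x)"

definition HL :: "nat \<Rightarrow> nat \<Rightarrow> ((nat \<Rightarrow> 'a::field) \<Rightarrow> 'a) \<Rightarrow> bool" where
  "HL s n \<phi> \<longleftrightarrow> (\<exists>c\<in>Lspace s n. \<forall>x. \<phi> x = peval s n c x)"

definition one_poly :: "(nat\<Rightarrow>nat) \<Rightarrow> 'a::field" where
  "one_poly = (\<lambda>a. if a = (\<lambda>_. 0) then 1 else 0)"

lemma exps_deg_0: "exps_deg s 0 = {\<lambda>_. 0}"
proof safe
  fix a assume a: "a \<in> exps_deg s 0"
  show "a = (\<lambda>_. 0)"
  proof
    fix i show "a i = 0"
      using a by (cases "i < s") (auto simp: exps_deg_def)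
  qed
qed (auto simp: exps_deg_def)

lemma HP_one: "HP s 0 (\<lambda>x. 1)"
  unfolding HP_def
  by (rule bexI[of _ one_poly]) (auto simp: peval_def exps_deg_0 one_poly_def hpolys_def)

lemma HP_lin: assumes "HP s n \<phi>" shows "HP s (Suc n) (\<lambda>x. lin s L x * \<phi> x)"
proof -
  obtain c where c: "c \<in> hpolys s n" "\<And>x. \<phi> x = peval s n c x" using assms by (auto simp: HP_def)
  show ?thesis unfolding HP_def
    by (rule bexI[of _ "mul_lin s L c"]) (auto simp: c(2) peval_mul_lin[OF c(1)] mul_lin_hpolys[OF c(1)])
qed

lemma HL_lin: assumes "HL s n \<phi>" shows "HL s (Suc n) (\<lambda>x. lin s L x * \<phi> x)"
proof -
  obtain c where c: "c \<in> Lspace s n" "\<And>x. \<phi> x = peval s n c x" using assms by (auto simp: HL_def)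
  have "c \<in> hpolys s n" using c by (simp add: Lspace_def)
  then show ?thesis unfolding HL_def
    by (intro bexI[of _ "mul_lin s L c"]) (auto simp: c(2) peval_mul_lin[OF \<open>c \<in> hpolys s n\<close>] mul_lin_Lspace[OF c(1)])
qed

lemma HL_x0: assumes "0 < s" "HP s n \<phi>" shows "HL s (Suc n) (\<lambda>x. x 0 * \<phi> x)"
proof -
  obtain c where c: "c \<in> hpolys s n" "\<And>x. \<phi> x = peval s n c x" using assms by (auto simp: HP_def)
  define L0 where "L0 = (\<lambda>i::nat. if i = 0 then (1::'a) else 0)"
  have L0z: "\<And>i. i \<noteq> 0 \<Longrightarrow> L0 i = 0" by (simp add: L0_def)
  have l: "lin s L0 x = x 0" for x
  proof -
    have "lin s L0 x = (\<Sum>i<s. if i = 0 then x i else 0)" unfolding lin_def L0_def by (rule sum.cong) auto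
    also have "\<dots> = x 0" using assms(1) by (simp add: sum.delta)
    finally show ?thesis .
  qed
  show ?thesis unfolding HL_def
    by (rule bexI[of _ "mul_lin s L0 c"]) (auto simp: c(2) peval_mul_lin[OF c(1)] mul_lin_Lspace0[OF c(1) L0z] l)
qed

lemma HP_prod: assumes "HP s n \<phi>" "finite S"
  shows "HP s (n + card S) (\<lambda>x. (\<Prod>j\<in>S. lin s (L j) x) * \<phi> x)"
  using assms(2)
proof (induction S rule: finite_induct)
  case empty then show ?case using assms(1) by simp
next
  case (insert a S)
  have "HP s (Suc (n + card S)) (\<lambda>x. lin s (L a) x * ((\<Prod>j\<in>S. lin s (L j) x) * \<phi> x))"
    using HP_lin insert by blast
  then show ?case using insert by (simp add: mult.assoc)
qed

lemma HL_prod: assumes "HL s n \<phi>" "finite S"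
  shows "HL s (n + card S) (\<lambda>x. (\<Prod>j\<in>S. lin s (L j) x) * \<phi> x)"
  using assms(2)
proof (induction S rule: finite_induct)
  case empty then show ?case using assms(1) by simp
next
  case (insert a S)
  have "HL s (Suc (n + card S)) (\<lambda>x. lin s (L a) x * ((\<Prod>j\<in>S. lin s (L j) x) * \<phi> x))"
    using HL_lin insert by blast
  then show ?case using insert by (simp add: mult.assoc)
qed

definition lform :: "nat \<Rightarrow> 'a \<Rightarrow> nat \<Rightarrow> nat \<Rightarrow> 'a::field" where
  "lform a c b = (\<lambda>i. (if i = a then 1 else 0) - c * (if i = b then 1 else 0))"

lemma lin_lform: assumes "a < s" "b < s" shows "lin s (lform a c b) x = x a - c * x b"
proof -
  have "lin s (lform a c b) x = (\<Sum>i<s. (if i = a then x i else 0) - c * (if i = b then x i else 0))"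
    unfolding lin_def lform_def by (rule sum.cong) (auto simp: algebra_simps)
  also have "\<dots> = (\<Sum>i<s. (if i = a then x i else 0)) - c * (\<Sum>i<s. (if i = b then x i else 0))"
    by (simp only: sum_subtractf sum_distrib_left)
  also have "\<dots> = x a - c * x b" using assms by (simp add: sum.delta)
  finally show ?thesis .
qed


definition fnz :: "(nat \<Rightarrow> 'a::field) \<Rightarrow> nat" where "fnz x = (LEAST i. x i \<noteq> 0)"
definition nrm :: "(nat \<Rightarrow> 'a::field) \<Rightarrow> nat \<Rightarrow> 'a" where "nrm x = (\<lambda>i. x i / x (fnz x))"
definition isnorm :: "nat \<Rightarrow> (nat \<Rightarrow> 'a::field) \<Rightarrow> nat \<Rightarrow> bool" where
  "isnorm s p j \<longleftrightarrow> j < s \<and> p j = 1 \<and> (\<forall>i<j. p i = 0) \<and> (\<forall>i\<ge>s. p i = 0)"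

lemma fnz1: "x i \<noteq> 0 \<Longrightarrow> x (fnz x) \<noteq> 0" unfolding fnz_def by (rule LeastI[where P="\<lambda>i. x i \<noteq> 0"])
lemma fnz2: "x i \<noteq> 0 \<Longrightarrow> fnz x \<le> i" unfolding fnz_def by (rule Least_le)
lemma fnz3: "j < fnz x \<Longrightarrow> x j = 0" unfolding fnz_def using not_less_Least by blast

lemma projpt_scale: assumes "c \<noteq> 0" shows "projpt (\<lambda>i. c * x i) = projpt x"
proof safe
  fix y assume "y \<in> projpt (\<lambda>i. c * x i)"
  then obtain k where "k \<noteq> 0" "y = (\<lambda>i. k * (c * x i))" by (auto simp: projpt_def)
  then show "y \<in> projpt x" using assms unfolding projpt_def
    by (intro CollectI exI[of _ "k * c"]) (auto simp: mult.assoc)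
next
  fix y assume "y \<in> projpt x"
  then obtain k where "k \<noteq> 0" "y = (\<lambda>i. k * x i)" by (auto simp: projpt_def)
  then show "y \<in> projpt (\<lambda>i. c * x i)" using assms unfolding projpt_def
    by (intro CollectI exI[of _ "k / c"]) auto
qed

lemma projpt_self: "x \<in> projpt x"
  unfolding projpt_def by (intro CollectI exI[of _ 1]) auto

lemma projpt_mem: "y \<in> projpt x \<Longrightarrow> \<exists>k. k \<noteq> 0 \<and> y = (\<lambda>i. k * x i)"
  by (auto simp: projpt_def)

lemma nrm_alt: "nrm x = (\<lambda>i. (1 / x (fnz x)) * x i)"
  by (simp add: nrm_def)

lemma projpt_nrm: assumes "x i \<noteq> 0" shows "projpt (nrm x) = projpt x"
  unfolding nrm_alt using fnz1[of x i, OF assms] by (intro projpt_scale) auto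

lemma isnorm_nrm: assumes "x i \<noteq> 0" "i < s" "\<forall>i\<ge>s. x i = 0" shows "isnorm s (nrm x) (fnz x)"
  using fnz1[of x i, OF assms(1)] fnz2[of x i, OF assms(1)] fnz3[of _ x] assms unfolding isnorm_def nrm_def by auto

lemma peval_zero_projpt: "(\<forall>x\<in>projpt p. peval s d c x = 0) \<longleftrightarrow> peval s d c p = 0"
proof
  assume "\<forall>x\<in>projpt p. peval s d c x = 0" then show "peval s d c p = 0" using projpt_self by blast
next
  assume h: "peval s d c p = 0"
  show "\<forall>x\<in>projpt p. peval s d c x = 0"
  proof
    fix x assume "x \<in> projpt p"
    then obtain k where "x = (\<lambda>i. k * p i)" using projpt_mem by blast
    then show "peval s d c x = 0" using h by (simp add: peval_homog)
  qed
qed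

lemma isnorm_eq:
  assumes "isnorm s p j" "isnorm s x j" "\<forall>i. j < i \<and> i < s \<longrightarrow> x i = p i" shows "x = p"
proof
  fix i show "x i = p i" using assms unfolding isnorm_def
    by (cases "i < j"; cases "i = j"; cases "i < s") auto
qed

definition ind :: "nat \<Rightarrow> nat \<Rightarrow> nat \<Rightarrow> (nat \<Rightarrow> 'a::{finite,field}) \<Rightarrow> (nat \<Rightarrow> 'a) \<Rightarrow> 'a" where
  "ind s M j p x = (\<Prod>m\<in>{..<M}. lin s (lform j 0 j) x) *
     ((\<Prod>ic\<in>{..<j} \<times> (UNIV - {0}). lin s (lform j (snd ic) (fst ic)) x) *
      ((\<Prod>ic\<in>Sigma {j<..<s} (\<lambda>i. UNIV - {p i}). lin s (lform (fst ic) (snd ic) j) x) * 1))"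

lemma card_S2: "card ({..<j} \<times> (UNIV - {0::'a::{finite,field}})) = j * (CARD('a) - 1)"
  by (simp add: card_cartesian_product card_Diff_singleton)

lemma card_S3: "card (Sigma {j<..<s} (\<lambda>i. UNIV - {p i::'a::{finite,field}})) = (s - Suc j) * (CARD('a) - 1)"
  by (simp add: card_SigmaI card_Diff_singleton)

lemma HP_ind:
  assumes "j < s" "(s - 1) * (CARD('a) - 1) < d"
  shows "HP s d (ind s (d - (s - 1) * (CARD('a) - 1)) j (p :: nat \<Rightarrow> 'a::{finite,field}))"
proof -
  have "HP s (0 + card (Sigma {j<..<s} (\<lambda>i. UNIV - {p i})))
    (\<lambda>x. (\<Prod>ic\<in>Sigma {j<..<s} (\<lambda>i. UNIV - {p i}). lin s (lform (fst ic) (snd ic) j) x) * 1)"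
    by (rule HP_prod[OF HP_one]) auto
  then have "HP s (0 + card (Sigma {j<..<s} (\<lambda>i. UNIV - {p i})) + card ({..<j} \<times> (UNIV - {0::'a})))
    (\<lambda>x. (\<Prod>ic\<in>{..<j} \<times> (UNIV - {0}). lin s (lform j (snd ic) (fst ic)) x) *
      ((\<Prod>ic\<in>Sigma {j<..<s} (\<lambda>i. UNIV - {p i}). lin s (lform (fst ic) (snd ic) j) x) * 1))"
    by (rule HP_prod) auto
  then have "HP s (0 + card (Sigma {j<..<s} (\<lambda>i. UNIV - {p i})) + card ({..<j} \<times> (UNIV - {0::'a}))
       + card {..<d - (s - 1) * (CARD('a) - 1)})
    (ind s (d - (s - 1) * (CARD('a) - 1)) j p)"
    unfolding ind_def by (rule HP_prod) auto
  moreover have "0 + card (Sigma {j<..<s} (\<lambda>i. UNIV - {p i})) + card ({..<j} \<times> (UNIV - {0::'a}))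
       + card {..<d - (s - 1) * (CARD('a) - 1)} = d"
  proof -
    have "(s - Suc j) * (CARD('a) - 1) + j * (CARD('a) - 1) = (s - 1) * (CARD('a) - 1)"
      using assms(1) by (simp add: add_mult_distrib[symmetric])
    then show ?thesis using assms(2) by (simp add: card_S2 card_S3)
  qed
  ultimately show ?thesis by simp
qed

lemma ind_val:
  fixes p x :: "nat \<Rightarrow> 'a::{finite,field}"
  assumes p: "isnorm s p j" and x: "isnorm s x j'" and M: "1 \<le> M"
  shows "ind s M j p x \<noteq> 0 \<longleftrightarrow> x = p"
proof -
  have js: "j < s" and j's: "j' < s" using p x by (auto simp: isnorm_def)
  have e1: "(\<Prod>m\<in>{..<M}. lin s (lform j 0 j) x) = x j ^ M"
    using js by (simp add: lin_lform)
  have e2: "(\<Prod>ic\<in>{..<j} \<times> (UNIV - {0}). lin s (lform j (snd ic) (fst ic)) x)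
      = (\<Prod>ic\<in>{..<j} \<times> (UNIV - {0}). x j - snd ic * x (fst ic))"
    using js by (intro prod.cong refl) (auto simp: lin_lform)
  have e3: "(\<Prod>ic\<in>Sigma {j<..<s} (\<lambda>i. UNIV - {p i}). lin s (lform (fst ic) (snd ic) j) x)
      = (\<Prod>ic\<in>Sigma {j<..<s} (\<lambda>i. UNIV - {p i}). x (fst ic) - snd ic * x j)"
    using js by (intro prod.cong refl) (auto simp: lin_lform)
  have val: "ind s M j p x = x j ^ M * ((\<Prod>ic\<in>{..<j} \<times> (UNIV - {0}). x j - snd ic * x (fst ic)) *
     (\<Prod>ic\<in>Sigma {j<..<s} (\<lambda>i. UNIV - {p i}). x (fst ic) - snd ic * x j))"
    unfolding ind_def e1 e2 e3 by simp
  show ?thesis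
  proof
    assume "x = p"
    then have xj: "x j = 1" and xl: "\<And>i. i < j \<Longrightarrow> x i = 0" using p by (auto simp: isnorm_def)
    have "(\<Prod>ic\<in>{..<j} \<times> (UNIV - {0}). x j - snd ic * x (fst ic)) \<noteq> 0"
      using xj xl by (subst prod_zero_iff) auto
    moreover have "(\<Prod>ic\<in>Sigma {j<..<s} (\<lambda>i. UNIV - {p i}). x (fst ic) - snd ic * x j) \<noteq> 0"
      using xj \<open>x = p\<close> by (subst prod_zero_iff) auto
    ultimately show "ind s M j p x \<noteq> 0" unfolding val using xj by simp
  next
    assume ne: "ind s M j p x \<noteq> 0"
    have xj0: "x j \<noteq> 0"
    proof
      assume "x j = 0" then show False using ne M unfolding val by (simp add: power_0_left)
    qed
    have "j' \<le> j" using x xj0 unfolding isnorm_def by (meson not_le)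
    moreover have "\<not> j' < j"
    proof
      assume "j' < j"
      then have "(j', x j) \<in> {..<j} \<times> (UNIV - {0})" using xj0 by auto
      moreover have "x j - x j * x j' = 0" using x by (simp add: isnorm_def)
      ultimately have "\<exists>ic\<in>{..<j} \<times> (UNIV - {0}). x j - snd ic * x (fst ic) = 0" by force
      then have "(\<Prod>ic\<in>{..<j} \<times> (UNIV - {0}). x j - snd ic * x (fst ic)) = 0"
        by (subst prod_zero_iff) auto
      then show False using ne unfolding val by simp
    qed
    ultimately have jj: "j' = j" by simp
    have "\<forall>i. j < i \<and> i < s \<longrightarrow> x i = p i"
    proof (intro allI impI)
      fix i assume i: "j < i \<and> i < s"
      show "x i = p i"
      proof (rule ccontr)
        assume "x i \<noteq> p i"
        then have "(i, x i) \<in> Sigma {j<..<s} (\<lambda>i. UNIV - {p i})" using i by auto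
        moreover have "x i - x i * x j = 0" using x jj by (simp add: isnorm_def)
        ultimately have "\<exists>ic\<in>Sigma {j<..<s} (\<lambda>i. UNIV - {p i}). x (fst ic) - snd ic * x j = 0" by force
        then have "(\<Prod>ic\<in>Sigma {j<..<s} (\<lambda>i. UNIV - {p i}). x (fst ic) - snd ic * x j) = 0"
          by (subst prod_zero_iff) auto
        then show False using ne unfolding val by simp
      qed
    qed
    then show "x = p" using isnorm_eq[OF p] x jj by blast
  qed
qed


interpretation VS: vector_space "\<lambda>(c::'a::field) (f::(nat\<Rightarrow>nat)\<Rightarrow>'a). \<lambda>a. c * f a"
  by unfold_locales (simp_all add: fun_eq_iff algebra_simps)

lemma sum_fun_app: "(\<Sum>v\<in>t. F v) a = (\<Sum>v\<in>t. F v a)"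
  by (induction t rule: infinite_finite_induct) auto

lemma peval_zero: "peval s d 0 x = 0" by (simp add: peval_def)
lemma peval_zero': "peval s d (\<lambda>a. 0) x = 0" by (simp add: peval_def)
lemma peval_plus: "peval s d (f + g) x = peval s d f x + peval s d g x"
  by (simp add: plus_fun_def peval_add)
lemma peval_minus: "peval s d (f - g) x = peval s d f x - peval s d g x"
  by (simp add: fun_diff_def peval_def sum_subtractf left_diff_distrib)
lemma peval_sum: "peval s d (\<Sum>v\<in>t. F v) x = (\<Sum>v\<in>t. peval s d (F v) x)"
  by (induction t rule: infinite_finite_induct) (auto simp: peval_zero peval_zero' peval_plus peval_add)

lemma hpolys_subspace: "VS.subspace (hpolys s d)"
  unfolding VS.subspace_def hpolys_def by auto

lemma hpolys_span: "hpolys s d \<subseteq> VS.span ((\<lambda>a. (\<lambda>b. if b = a then (1::'a::field) else 0)) ` exps_deg s d)"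
proof
  fix c :: "(nat \<Rightarrow> nat) \<Rightarrow> 'a" assume c: "c \<in> hpolys s d"
  have "c = (\<Sum>a\<in>exps_deg s d. (\<lambda>b. c a * (if b = a then 1 else 0)))"
  proof
    fix b
    show "c b = (\<Sum>a\<in>exps_deg s d. (\<lambda>b. c a * (if b = a then 1 else 0))) b"
      unfolding sum_fun_app using c finite_exps_deg[of s d]
      by (auto simp: hpolys_def if_distrib sum.delta cong: if_cong)
  qed
  also have "\<dots> \<in> VS.span ((\<lambda>a. (\<lambda>b. if b = a then (1::'a::field) else 0)) ` exps_deg s d)"
    by (intro VS.span_sum VS.span_scale VS.span_base) auto
  finally show "c \<in> VS.span ((\<lambda>a. (\<lambda>b. if b = a then (1::'a::field) else 0)) ` exps_deg s d)" .
qed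

lemma hilbert_dim:
  fixes X :: "(nat \<Rightarrow> 'a::{finite,field}) set set"
  assumes finX: "finite X"
    and XP: "\<And>P. P \<in> X \<Longrightarrow> \<exists>x. P = projpt x \<and> (\<forall>i\<ge>s. x i = 0) \<and> (\<exists>i<s. x i \<noteq> 0)"
    and dbig: "(s - 1) * (CARD('a) - 1) < d"
  shows "VS.dim (hpolys s d :: ((nat \<Rightarrow> nat) \<Rightarrow> 'a) set) = VS.dim (vanishing_ideal_hom s d X) + card X"
proof -
  define rep where "rep (P :: (nat \<Rightarrow> 'a) set) = nrm (SOME x. P = projpt x \<and> (\<forall>i\<ge>s. x i = 0) \<and> (\<exists>i<s. x i \<noteq> 0))" for P
  have rep: "P = projpt (rep P) \<and> (\<exists>j. isnorm s (rep P) j)" if "P \<in> X" for P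
  proof -
    let ?x = "SOME x. P = projpt x \<and> (\<forall>i\<ge>s. x i = 0) \<and> (\<exists>i<s. x i \<noteq> 0)"
    have "P = projpt ?x \<and> (\<forall>i\<ge>s. ?x i = 0) \<and> (\<exists>i<s. ?x i \<noteq> 0)" using someI_ex[OF XP[OF that]] .
    then obtain i where "P = projpt ?x" "\<forall>i\<ge>s. ?x i = 0" "i < s" "?x i \<noteq> 0" by blast
    then show ?thesis unfolding rep_def using projpt_nrm[of ?x i] isnorm_nrm[of ?x i s] by auto
  qed
  define ev where "ev P v = peval s d v (rep P)" for P v
  define M where "M = d - (s - 1) * (CARD('a) - 1)"
  have M1: "1 \<le> M" using dbig by (simp add: M_def)
  have gex: "\<exists>g. g \<in> hpolys s d \<and> ev P g = 1 \<and> (\<forall>Q\<in>X. Q \<noteq> P \<longrightarrow> ev Q g = 0)" if P: "P \<in> X" for P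
  proof -
    obtain j where j: "isnorm s (rep P) j" using rep[OF P] by blast
    have js: "j < s" using j by (simp add: isnorm_def)
    obtain c where c: "c \<in> hpolys s d" "\<And>x. ind s M j (rep P) x = peval s d c x"
      using HP_ind[OF js dbig, of "rep P"] unfolding HP_def M_def by blast
    define v where "v = ind s M j (rep P) (rep P)"
    have v: "v \<noteq> 0" using ind_val[OF j j M1] by (simp add: v_def)
    show ?thesis
    proof (intro exI[of _ "\<lambda>a. (1 / v) * c a"] conjI ballI impI)
      show "(\<lambda>a. 1 / v * c a) \<in> hpolys s d" using c(1) by (simp add: hpolys_def)
      show "ev P (\<lambda>a. 1 / v * c a) = 1" unfolding ev_def peval_scale c(2)[symmetric] v_def[symmetric] using v by simp
      fix Q assume Q: "Q \<in> X" "Q \<noteq> P"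
      obtain j' where j': "isnorm s (rep Q) j'" using rep[OF Q(1)] by blast
      have "rep Q \<noteq> rep P" using rep[OF Q(1)] rep[OF P] Q(2) by metis
      then have "ind s M j (rep P) (rep Q) = 0" using ind_val[OF j j' M1] by blast
      then show "ev Q (\<lambda>a. 1 / v * c a) = 0" unfolding ev_def peval_scale c(2)[symmetric] by simp
    qed
  qed
  then have "\<forall>P\<in>X. \<exists>g. g \<in> hpolys s d \<and> ev P g = 1 \<and> (\<forall>Q\<in>X. Q \<noteq> P \<longrightarrow> ev Q g = 0)" by blast
  from bchoice[OF this] obtain g where
    g: "\<forall>P\<in>X. g P \<in> hpolys s d \<and> ev P (g P) = 1 \<and> (\<forall>Q\<in>X. Q \<noteq> P \<longrightarrow> ev Q (g P) = 0)" by blast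
  define V :: "((nat \<Rightarrow> nat) \<Rightarrow> 'a) set" where "V = hpolys s d"
  define W :: "((nat \<Rightarrow> nat) \<Rightarrow> 'a) set" where "W = vanishing_ideal_hom s d X"
  have Wchar: "f \<in> W \<longleftrightarrow> f \<in> V \<and> (\<forall>P\<in>X. ev P f = 0)" for f
  proof -
    have "(\<forall>x\<in>P. peval s d f x = 0) \<longleftrightarrow> ev P f = 0" if "P \<in> X" for P
      using rep[OF that] peval_zero_projpt[of "rep P" s d f] unfolding ev_def by metis
    then show ?thesis unfolding W_def V_def vanishing_ideal_hom_def by auto
  qed
  obtain BW where BW: "BW \<subseteq> W" "VS.independent BW" "W \<subseteq> VS.span BW" "card BW = VS.dim W"
    using VS.basis_exists by blast
  have WV: "W \<subseteq> V" using Wchar by blast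
  have finBW: "finite BW"
    using VS.independent_span_bound[OF _ BW(2), of "(\<lambda>a. (\<lambda>b. if b = a then (1::'a) else 0)) ` exps_deg s d"]
      BW(1) WV hpolys_span[of s d] finite_exps_deg[of s d] unfolding V_def by blast
  define G where "G = g ` X"
  have gnotW: "g P \<notin> W" if "P \<in> X" for P using g that Wchar by force
  have disj: "BW \<inter> G = {}" using gnotW BW(1) unfolding G_def by blast
  have ginj: "inj_on g X"
  proof
    fix P Q assume PQ: "P \<in> X" "Q \<in> X" "g P = g Q"
    show "P = Q"
    proof (rule ccontr)
      assume "P \<noteq> Q"
      then have "ev Q (g P) = 0" using g PQ by blast
      moreover have "ev Q (g Q) = 1" using g PQ by blast
      ultimately show False using PQ by simp
    qed
  qed
  have cardG: "card G = card X" unfolding G_def using ginj by (simp add: card_image)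
  have finG: "finite G" unfolding G_def using finX by simp
  have ev_sum: "ev P (\<Sum>v\<in>t. (\<lambda>a. u v * v a)) = (\<Sum>v\<in>t. u v * ev P v)" for P t u
    unfolding ev_def peval_sum peval_scale ..
  have ev_single: "(\<Sum>v\<in>t. u v * ev P v) = u (g P)" if t: "finite t" "t \<subseteq> BW \<union> G" "g P \<in> t" and P: "P \<in> X" for t u P
  proof -
    have "(\<Sum>v\<in>t. u v * ev P v) = u (g P) * ev P (g P) + (\<Sum>v\<in>t - {g P}. u v * ev P v)"
      using t by (simp add: sum.remove)
    moreover have "(\<Sum>v\<in>t - {g P}. u v * ev P v) = 0"
    proof (rule sum.neutral, rule ballI)
      fix v assume v: "v \<in> t - {g P}"
      show "u v * ev P v = 0"
      proof (cases "v \<in> BW")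
        case True then show ?thesis using BW(1) Wchar P by auto
      next
        case False
        then obtain Q where "Q \<in> X" "v = g Q" using v t unfolding G_def by blast
        then show ?thesis using g P v by auto
      qed
    qed
    ultimately show ?thesis using g P by simp
  qed
  have indep: "VS.independent (BW \<union> G)"
    unfolding VS.independent_explicit_module
  proof (intro allI impI)
    fix t u v
    assume t: "finite t" "t \<subseteq> BW \<union> G" "(\<Sum>v\<in>t. (\<lambda>a. u v * v a)) = 0" "v \<in> t"
    have uG: "u w = 0" if wt: "w \<in> t \<inter> G" for w
    proof -
      obtain P where P: "P \<in> X" "w = g P" using wt unfolding G_def by blast
      have "ev P (\<Sum>v\<in>t. (\<lambda>a. u v * v a)) = 0" using t(3) by (simp add: ev_def peval_zero)
      then show ?thesis using ev_sum ev_single[OF t(1,2) _ P(1), of u] P wt by simp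
    qed
    have split: "(\<Sum>v\<in>t. (\<lambda>a. u v * v a)) = (\<Sum>v\<in>t \<inter> BW. (\<lambda>a. u v * v a)) + (\<Sum>v\<in>t \<inter> G. (\<lambda>a. u v * v a))"
    proof -
      have "t = (t \<inter> BW) \<union> (t \<inter> G)" using t(2) by blast
      then show ?thesis using sum.union_disjoint[of "t \<inter> BW" "t \<inter> G"] t(1) disj
        by (metis (no_types, lifting) Int_assoc Int_empty_right Int_left_commute finite_Int)
    qed
    have "(\<Sum>v\<in>t \<inter> G. (\<lambda>a. u v * v a)) = 0"
      by (rule sum.neutral) (auto simp: uG fun_eq_iff)
    then have z: "(\<Sum>v\<in>t \<inter> BW. (\<lambda>a. u v * v a)) = 0" using split t(3) by simp
    show "u v = 0"
    proof (cases "v \<in> BW")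
      case True
      then show ?thesis using VS.independentD[OF BW(2), of "t \<inter> BW" u v] z t by auto
    next
      case False then show ?thesis using uG t by blast
    qed
  qed
  have spanV: "V \<subseteq> VS.span (BW \<union> G)"
  proof
    fix v assume v: "v \<in> V"
    define S where "S = (\<Sum>P\<in>X. (\<lambda>a. ev P v * g P a))"
    have SV: "S \<in> V" unfolding S_def V_def
      by (intro VS.subspace_sum[OF hpolys_subspace] VS.subspace_scale[OF hpolys_subspace]) (use g in auto)
    have evS: "ev Q S = ev Q v" if Q: "Q \<in> X" for Q
    proof -
      have "ev Q S = (\<Sum>P\<in>X. ev P v * ev Q (g P))" unfolding S_def ev_def peval_sum peval_scale ..
      also have "\<dots> = ev Q v * ev Q (g Q) + (\<Sum>P\<in>X - {Q}. ev P v * ev Q (g P))"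
        using finX Q by (simp add: sum.remove)
      also have "(\<Sum>P\<in>X - {Q}. ev P v * ev Q (g P)) = 0"
        by (rule sum.neutral) (use g Q in auto)
      finally show ?thesis using g Q by simp
    qed
    have "v - S \<in> W"
      unfolding Wchar
    proof
      show "v - S \<in> V" using VS.subspace_diff[OF hpolys_subspace] v SV unfolding V_def by blast
      show "\<forall>P\<in>X. ev P (v - S) = 0" using evS by (simp add: ev_def peval_minus)
    qed
    then have "v - S \<in> VS.span (BW \<union> G)" using BW(3) VS.span_mono[of BW "BW \<union> G"] by blast
    moreover have "S \<in> VS.span (BW \<union> G)" unfolding S_def
      by (intro VS.span_sum VS.span_scale VS.span_base) (auto simp: G_def)
    ultimately have "(v - S) + S \<in> VS.span (BW \<union> G)" by (rule VS.span_add)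
    then show "v \<in> VS.span (BW \<union> G)" by simp
  qed
  have Bsub: "BW \<union> G \<subseteq> V" using BW(1) WV g unfolding G_def V_def by auto
  have "card (BW \<union> G) = VS.dim V" by (rule VS.basis_card_eq_dim[OF Bsub spanV indep])
  moreover have "card (BW \<union> G) = card BW + card G" using finBW finG disj by (simp add: card_Un_disjoint)
  ultimately show ?thesis using BW(4) cardG unfolding V_def W_def by simp
qed


lemma hdeg_const:
  assumes ev: "eventually (\<lambda>d. H d = n) sequentially" and n: "n > 0"
  shows "hdeg H = real n"
proof -
  have ne: "\<not> eventually (\<lambda>d. H d = 0) sequentially"
  proof
    assume "eventually (\<lambda>d. H d = 0) sequentially"
    with ev have "eventually (\<lambda>d. False) sequentially"
      by (rule eventually_elim2) (use n in auto)
    then show False by simp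
  qed
  have lim0: "(\<lambda>d. real (H d) / real d ^ 0) \<longlonglongrightarrow> real n"
    by (rule tendsto_eventually) (use ev in \<open>auto elim: eventually_mono\<close>)
  have uniq: "e = 0" if ex: "\<exists>L>0. (\<lambda>d. real (H d) / real d ^ e) \<longlonglongrightarrow> L" for e
  proof (rule ccontr)
    assume e: "e \<noteq> 0"
    obtain L where L: "L > 0" "(\<lambda>d. real (H d) / real d ^ e) \<longlonglongrightarrow> L" using ex by blast
    have "filterlim (\<lambda>d. real d ^ e) at_top sequentially"
      using e by (intro filterlim_pow_at_top filterlim_real_sequentially) auto
    then have "(\<lambda>d. real n / real d ^ e) \<longlonglongrightarrow> 0"
      by (intro tendsto_divide_0[OF tendsto_const] filterlim_at_top_imp_at_infinity)
    moreover have evq: "eventually (\<lambda>d. real (H d) / real d ^ e = real n / real d ^ e) sequentially"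
      using ev by (rule eventually_mono) auto
    ultimately have "(\<lambda>d. real (H d) / real d ^ e) \<longlonglongrightarrow> 0" using tendsto_cong[OF evq] by blast
    then have "L = 0" using L(2) LIMSEQ_unique by metis
    then show False using L(1) by simp
  qed
  have the0: "(THE e. \<exists>L>0. (\<lambda>d. real (H d) / real d ^ e) \<longlonglongrightarrow> L) = 0"
  proof (rule the_equality)
    show "\<exists>L>0. (\<lambda>d. real (H d) / real d ^ 0) \<longlonglongrightarrow> L" using lim0 n by (intro exI[of _ "real n"]) auto
  qed (rule uniq)
  have "lim (\<lambda>d. real (H d) / real d ^ 0) = real n" using lim0 by (rule limI)
  then show ?thesis unfolding hdeg_def using ne the0 by (simp add: Let_def)
qed


fun gb :: "nat \<Rightarrow> nat list \<Rightarrow> nat" where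
  "gb D [] = 1"
| "gb D (d # ds) = (if D < d then (d - D) * prod_list ds else gb (D - (d - 1)) ds)"

lemma gb_shift:
  assumes "sorted ds" "\<forall>d\<in>set ds. x \<le> d" "1 \<le> x" "x - 1 \<le> E"
  shows "gb (E - (x - 1)) ds \<le> x * gb E ds"
  using assms
proof (induction ds arbitrary: E)
  case Nil then show ?case by simp
next
  case (Cons d' ds')
  have xd': "x \<le> d'" using Cons.prems by simp
  have srt: "sorted ds'" "\<forall>d\<in>set ds'. d' \<le> d" using Cons.prems by auto
  show ?case
  proof (cases "E < d'")
    case True
    then have lhs: "gb (E - (x - 1)) (d' # ds') = (d' - (E - (x - 1))) * prod_list ds'" by simp
    have rhs: "gb E (d' # ds') = (d' - E) * prod_list ds'" using True by simp
    define a where "a = d' - E"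
    have a1: "d' - (E - (x - 1)) = a + (x - 1)" using True Cons.prems(4) by (simp add: a_def)
    have a2: "(x - 1) * 1 \<le> (x - 1) * a" using True by (intro mult_left_mono) (auto simp: a_def)
    obtain x' where "x = Suc x'" using Cons.prems(3) by (cases x) auto
    then have a3: "x * a = a + (x - 1) * a" by simp
    have "d' - (E - (x - 1)) \<le> x * (d' - E)" using a1 a2 a3 by (simp add: a_def)
    then show ?thesis unfolding lhs rhs by (simp add: mult.assoc[symmetric] mult_right_mono)
  next
    case False
    then have rhs: "gb E (d' # ds') = gb (E - (d' - 1)) ds'" by simp
    show ?thesis
    proof (cases "E - (x - 1) < d'")
      case False
      then have lhs0: "gb (E - (x - 1)) (d' # ds') = gb (E - (x - 1) - (d' - 1)) ds'"
        by simp
      have "E - (x - 1) - (d' - 1) = E - (d' - 1) - (x - 1)" by (simp add: diff_commute)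
      then have lhs: "gb (E - (x - 1)) (d' # ds') = gb (E - (d' - 1) - (x - 1)) ds'" using lhs0 by simp
      have "gb (E - (d' - 1) - (x - 1)) ds' \<le> x * gb (E - (d' - 1)) ds'"
        by (rule Cons.IH[OF srt(1)]) (use srt(2) xd' Cons.prems(3) False in auto)
      then show ?thesis unfolding lhs rhs .
    next
      case True
      then have lhs: "gb (E - (x - 1)) (d' # ds') = (d' - (E - (x - 1))) * prod_list ds'" by simp
      define v where "v = E - (d' - 1)"
      have v1: "1 \<le> v" "v < x" using True \<open>\<not> E < d'\<close> Cons.prems(4) xd' by (auto simp: v_def)
      have eqx: "d' - (E - (x - 1)) = x - v" using True \<open>\<not> E < d'\<close> Cons.prems(4) xd' by (auto simp: v_def)
      show ?thesis
      proof (cases ds')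
        case Nil
        then show ?thesis unfolding lhs rhs using eqx by simp
      next
        case (Cons d'' ds'')
        have xd'': "x \<le> d''" using Cons.prems(2) srt(2) xd' \<open>ds' = d'' # ds''\<close> by auto
        have g: "gb v ds' = (d'' - v) * prod_list ds''" using v1 xd'' \<open>ds' = d'' # ds''\<close> by simp
        have "(x - v) * d'' \<le> x * (d'' - v)"
        proof -
          have "v * x \<le> d'' * v" using xd'' by simp
          then show ?thesis using diff_le_mono2[of "v * x" "d'' * v" "d'' * x"] by (simp add: diff_mult_distrib diff_mult_distrib2 algebra_simps)
        qed
        then have "(x - v) * d'' * prod_list ds'' \<le> x * (d'' - v) * prod_list ds''" by (rule mult_right_mono) simp
        then show ?thesis unfolding lhs rhs eqx using g \<open>ds' = d'' # ds''\<close> v_def by (simp add: mult.assoc)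
      qed
    qed
  qed
qed

lemma gb_step:
  assumes "sorted (d # ds)" "e \<le> D" "e < d"
  shows "gb D (d # ds) \<le> (d - e) * gb (D - e) ds"
proof (cases "D < d")
  case True
  then have lhs: "gb D (d # ds) = (d - D) * prod_list ds" by simp
  show ?thesis
  proof (cases ds)
    case Nil then show ?thesis using lhs assms by simp
  next
    case (Cons d' ds')
    have dd': "d \<le> d'" using assms(1) Cons by simp
    have "D - e < d'" using True dd' by linarith
    then have g: "gb (D - e) ds = (d' - (D - e)) * prod_list ds'" using Cons by simp
    define u where "u = D - e"
    define w where "w = d - e"
    have uw: "u < w" "w \<le> d'" "d - D = w - u" using True assms dd' by (auto simp: u_def w_def)
    have "(w - u) * d' \<le> w * (d' - u)"
    proof -
      have "u * w \<le> d' * u" using uw by simp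
      then show ?thesis using diff_le_mono2[of "u*w" "d'*u" "d'*w"] by (simp add: diff_mult_distrib diff_mult_distrib2 algebra_simps)
    qed
    then have "(w - u) * d' * prod_list ds' \<le> w * (d' - u) * prod_list ds'" by (rule mult_right_mono) simp
    moreover have "gb D (d # ds) = (w - u) * d' * prod_list ds'" using lhs Cons uw(3) by (simp add: mult.assoc)
    moreover have "(d - e) * gb (D - e) ds = w * (d' - u) * prod_list ds'" using g by (simp add: u_def w_def mult.assoc)
    ultimately show ?thesis by simp
  qed
next
  case False
  then have lhs: "gb D (d # ds) = gb (D - (d - 1)) ds" by simp
  have s1: "sorted ds" using assms(1) by simp
  have s2: "\<forall>d'\<in>set ds. d - e \<le> d'" using assms(1) by fastforce
  have s3: "1 \<le> d - e" using assms(3) by simp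
  have s4: "d - e - 1 \<le> D - e" using False by simp
  have "gb (D - e - (d - e - 1)) ds \<le> (d - e) * gb (D - e) ds"
    by (rule gb_shift[OF s1 s2 s3 s4])
  moreover have "D - e - (d - e - 1) = D - (d - 1)" using assms False by auto
  ultimately show ?thesis unfolding lhs by simp
qed

lemma gb_0: "\<forall>d\<in>set ds. 1 \<le> d \<Longrightarrow> gb 0 ds = prod_list ds"
  by (cases ds) auto

lemma gb_alt: "1 \<le> d \<Longrightarrow> d - 1 \<le> D \<Longrightarrow> \<forall>d'\<in>set ds. 1 \<le> d' \<Longrightarrow> gb D (d # ds) = gb (D - (d - 1)) ds"
  by (cases "D < d") (auto simp: gb_0)

lemma prod_list_upt: "prod_list (map f [m..<n]) = (\<Prod>i\<in>{m..<n}. f i)"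
  by (metis distinct_upt prod.distinct_set_conv_list set_upt)

lemma gb_closed:
  assumes "\<forall>i. m \<le> i \<and> i < s \<longrightarrow> 1 \<le> f i" "m + j < s" "r < f (m + j)"
    and "D = (\<Sum>i\<in>{m..<m + j}. f i - 1) + r"
  shows "gb D (map f [m..<s]) = (f (m + j) - r) * (\<Prod>i\<in>{m + j + 1..<s}. f i)"
  using assms
proof (induction j arbitrary: m D)
  case 0
  then have "[m..<s] = m # [Suc m..<s]" by (simp add: upt_conv_Cons)
  then show ?case using 0 by (simp add: prod_list_upt)
next
  case (Suc j)
  have ms: "m < s" using Suc.prems by simp
  have up: "[m..<s] = m # [Suc m..<s]" using ms by (simp add: upt_conv_Cons)
  have sumsplit: "(\<Sum>i\<in>{m..<m + Suc j}. f i - 1) = (f m - 1) + (\<Sum>i\<in>{Suc m..<Suc m + j}. f i - 1)"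
    by (simp add: sum.atLeast_Suc_lessThan)
  have "gb D (f m # map f [Suc m..<s]) = gb (D - (f m - 1)) (map f [Suc m..<s])"
    by (rule gb_alt) (use Suc.prems ms sumsplit in auto)
  then have "gb D (map f [m..<s]) = gb (D - (f m - 1)) (map f [Suc m..<s])" using up by simp
  also have "\<dots> = (f (Suc m + j) - r) * (\<Prod>i\<in>{Suc m + j + 1..<s}. f i)"
    using Suc.prems sumsplit by (intro Suc.IH) auto
  finally show ?case by simp
qed


lemma poly_sum_lt:
  fixes q :: "'a::field poly"
  assumes "\<forall>j\<ge>N. coeff q j = 0" shows "poly q x = (\<Sum>j<N. coeff q j * x ^ j)"
proof -
  let ?M = "max N (Suc (degree q))"
  have "poly q x = (\<Sum>j<Suc (degree q). coeff q j * x ^ j)" by (simp add: poly_altdef lessThan_Suc_atMost)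
  also have "\<dots> = (\<Sum>j<?M. coeff q j * x ^ j)" by (rule sum.mono_neutral_left) (auto simp: coeff_eq_0)
  also have "\<dots> = (\<Sum>j<N. coeff q j * x ^ j)" by (rule sum.mono_neutral_right) (use assms in auto)
  finally show ?thesis .
qed

lemma pow_reduce:
  fixes C :: "'a::field set"
  assumes C: "finite C" "C \<noteq> {}"
  shows "\<exists>r. (\<forall>j. k < j \<longrightarrow> r j = 0) \<and> (\<forall>x\<in>C. x ^ k = (\<Sum>j<card C. r j * x ^ j))"
proof -
  define p :: "'a poly" where "p = (\<Prod>a\<in>C. [:-a, 1:])"
  have p0: "p \<noteq> 0" unfolding p_def using C(1) by (simp add: prod_zero_iff)
  have dp: "degree p = card C" unfolding p_def by (subst degree_prod_sum_eq) auto
  define q where "q = monom 1 k mod p"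
  have qx: "poly q x = x ^ k" if x: "x \<in> C" for x
  proof -
    have "poly p x = 0" unfolding p_def poly_prod using C(1) x by (simp add: prod_zero_iff)
    moreover have "monom 1 k = monom 1 k div p * p + q" by (simp add: q_def)
    then have "poly (monom 1 k) x = poly (monom 1 k div p) x * poly p x + poly q x" by (metis poly_add poly_mult)
    ultimately show ?thesis by (simp add: poly_monom)
  qed
  have dq: "coeff q j = 0" if "card C \<le> j" for j
  proof (cases "q = 0")
    case False
    then have "degree q < card C" using degree_mod_less'[OF p0] dp by (simp add: q_def)
    then show ?thesis using that by (intro coeff_eq_0) auto
  qed simp
  define r where "r j = (if j < card C then coeff q j else 0)" for j
  have r0: "r j = 0" if "k < j" for j
  proof (cases "j < card C")
    case True
    then have "degree (monom (1::'a) k) < degree p" using that dp by (simp add: degree_monom_eq)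
    then have "q = monom 1 k" unfolding q_def by (rule mod_poly_less)
    then show ?thesis using that by (simp add: r_def coeff_monom)
  qed (simp add: r_def)
  have "x ^ k = (\<Sum>j<card C. r j * x ^ j)" if "x \<in> C" for x
  proof -
    have "x ^ k = (\<Sum>j<card C. coeff q j * x ^ j)" using qx[OF that] poly_sum_lt[of "card C" q x] dq by simp
    also have "\<dots> = (\<Sum>j<card C. r j * x ^ j)" by (rule sum.cong) (auto simp: r_def)
    finally show ?thesis .
  qed
  then show ?thesis using r0 by blast
qed

lemma roots_bound:
  fixes f :: "nat \<Rightarrow> 'a::field"
  assumes "f e \<noteq> 0"
  shows "card {t. (\<Sum>j\<le>e. f j * t ^ j) = 0} \<le> e"
proof -
  define p where "p = (\<Sum>j\<le>e. monom (f j) j)"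
  have cp: "coeff p i = (if i \<le> e then f i else 0)" for i
    unfolding p_def by (simp add: coeff_sum coeff_monom)
  have p0: "p \<noteq> 0" using cp[of e] assms by auto
  have dp: "degree p \<le> e" by (rule degree_le) (auto simp: cp)
  have pe: "poly p t = (\<Sum>j\<le>e. f j * t ^ j)" for t unfolding p_def by (simp add: poly_sum poly_monom)
  show ?thesis using card_poly_roots_bound[OF p0] dp pe by simp
qed

definition PF :: "nat set \<Rightarrow> nat \<Rightarrow> ((nat \<Rightarrow> 'a::field) \<Rightarrow> 'a) \<Rightarrow> bool" where
  "PF I D \<phi> \<longleftrightarrow> (\<exists>S c. finite S \<and> (\<forall>a\<in>S. (\<Sum>i\<in>I. a i) \<le> D) \<and> (\<forall>y. \<phi> y = (\<Sum>a\<in>S. c a * (\<Prod>i\<in>I. y i ^ a i))))"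

lemma PF_indep: assumes "PF I D \<phi>" "i \<notin> I" shows "\<phi> (y(i := t)) = \<phi> y"
proof -
  obtain S c where S: "\<forall>y. \<phi> y = (\<Sum>a\<in>S. c a * (\<Prod>i\<in>I. y i ^ a i))" using assms(1) unfolding PF_def by blast
  have "(\<Prod>i'\<in>I. (y(i := t)) i' ^ a i') = (\<Prod>i'\<in>I. y i' ^ a i')" for a
    by (rule prod.cong) (use assms(2) in auto)
  then show ?thesis using S by simp
qed

lemma PF_decomp:
  fixes \<phi> :: "(nat \<Rightarrow> 'a::field) \<Rightarrow> 'a"
  assumes PF: "PF (insert i0 I) D \<phi>" and i0: "i0 \<notin> I" and I: "finite I" and C: "finite C" "C \<noteq> {}"
  shows "\<exists>F. (\<forall>j. PF I (D - j) (F j)) \<and> (\<forall>j y. D < j \<longrightarrow> F j y = 0) \<and>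
           (\<forall>y. y i0 \<in> C \<longrightarrow> \<phi> y = (\<Sum>j<card C. F j y * y i0 ^ j))"
proof -
  obtain S c where S: "finite S" "\<forall>a\<in>S. (\<Sum>i\<in>insert i0 I. a i) \<le> D"
    "\<forall>y. \<phi> y = (\<Sum>a\<in>S. c a * (\<Prod>i\<in>insert i0 I. y i ^ a i))"
    using PF unfolding PF_def by blast
  have "\<forall>k. \<exists>r. (\<forall>j. k < j \<longrightarrow> r j = 0) \<and> (\<forall>x\<in>C. x ^ k = (\<Sum>j<card C. r j * x ^ j))"
    using pow_reduce[OF C] by blast
  from choice[OF this] obtain R where
    R: "\<forall>k. (\<forall>j. k < j \<longrightarrow> R k j = 0) \<and> (\<forall>x\<in>C. x ^ k = (\<Sum>j<card C. R k j * x ^ j))" by blast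
  have R1: "R k j = 0" if "k < j" for k j using R that by blast
  have R2: "x ^ k = (\<Sum>j<card C. R k j * x ^ j)" if "x \<in> C" for x k using R that by blast
  have Ssum: "a i0 + (\<Sum>i\<in>I. a i) \<le> D" if "a \<in> S" for a using S(2) that i0 I by simp
  define F where "F j y = (\<Sum>a\<in>S. (c a * R (a i0) j) * (\<Prod>i\<in>I. y i ^ a i))" for j y
  have PFj: "PF I (D - j) (F j)" for j
  proof -
    have eq: "F j y = (\<Sum>a\<in>{a\<in>S. j \<le> a i0}. (c a * R (a i0) j) * (\<Prod>i\<in>I. y i ^ a i))" for y
      unfolding F_def by (rule sum.mono_neutral_right) (use S(1) R1 not_le in auto)
    have bnd: "\<forall>a\<in>{a\<in>S. j \<le> a i0}. (\<Sum>i\<in>I. a i) \<le> D - j" using Ssum by fastforce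
    show ?thesis unfolding PF_def
      by (intro exI[of _ "{a\<in>S. j \<le> a i0}"] exI[of _ "\<lambda>a. c a * R (a i0) j"]) (use S(1) eq bnd in auto)
  qed
  have Fz: "F j y = 0" if "D < j" for j y
    unfolding F_def by (rule sum.neutral) (use Ssum R1 that in fastforce)
  have dec: "\<phi> y = (\<Sum>j<card C. F j y * y i0 ^ j)" if yC: "y i0 \<in> C" for y
  proof -
    have "\<phi> y = (\<Sum>a\<in>S. c a * (y i0 ^ a i0 * (\<Prod>i\<in>I. y i ^ a i)))" using S(3) i0 I by simp
    also have "\<dots> = (\<Sum>a\<in>S. c a * ((\<Sum>j<card C. R (a i0) j * y i0 ^ j) * (\<Prod>i\<in>I. y i ^ a i)))"
    proof (rule sum.cong[OF refl])
      fix a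
      have "y i0 ^ a i0 = (\<Sum>j<card C. R (a i0) j * y i0 ^ j)" by (rule R2[OF yC])
      then show "c a * (y i0 ^ a i0 * (\<Prod>i\<in>I. y i ^ a i)) = c a * ((\<Sum>j<card C. R (a i0) j * y i0 ^ j) * (\<Prod>i\<in>I. y i ^ a i))"
        by simp
    qed
    also have "\<dots> = (\<Sum>a\<in>S. \<Sum>j<card C. (c a * R (a i0) j) * (\<Prod>i\<in>I. y i ^ a i) * y i0 ^ j)"
      by (simp add: sum_distrib_left sum_distrib_right mult_ac)
    also have "\<dots> = (\<Sum>j<card C. \<Sum>a\<in>S. (c a * R (a i0) j) * (\<Prod>i\<in>I. y i ^ a i) * y i0 ^ j)"
      by (rule sum.swap)
    also have "\<dots> = (\<Sum>j<card C. F j y * y i0 ^ j)" by (simp add: F_def sum_distrib_right)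
    finally show ?thesis .
  qed
  show ?thesis using PFj Fz dec by blast
qed


definition gridI :: "nat set \<Rightarrow> (nat \<Rightarrow> 'a::zero set) \<Rightarrow> (nat \<Rightarrow> 'a) set" where
  "gridI I C = {y. (\<forall>i\<in>I. y i \<in> C i) \<and> (\<forall>i. i \<notin> I \<longrightarrow> y i = 0)}"

lemma gridI_bij: "bij_betw (\<lambda>y. restrict y I) (gridI I C) (PiE I C)"
proof (rule bij_betw_byWitness[where f'="\<lambda>f i. if i \<in> I then f i else 0"])
  show "\<forall>a\<in>gridI I C. (\<lambda>i. if i \<in> I then restrict a I i else 0) = a"
    by (auto simp: gridI_def fun_eq_iff)
  show "\<forall>a'\<in>PiE I C. restrict (\<lambda>i. if i \<in> I then a' i else 0) I = a'"
    by (auto simp: PiE_def extensional_def fun_eq_iff)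
  show "(\<lambda>y. restrict y I) ` gridI I C \<subseteq> PiE I C" by (auto simp: gridI_def)
  show "(\<lambda>f i. if i \<in> I then f i else 0) ` PiE I C \<subseteq> gridI I C" by (auto simp: gridI_def)
qed

lemma card_gridI: "finite I \<Longrightarrow> card (gridI I C) = (\<Prod>i\<in>I. card (C i))"
  using bij_betw_same_card[OF gridI_bij] card_PiE by metis

lemma finite_gridI: "finite I \<Longrightarrow> (\<And>i. i \<in> I \<Longrightarrow> finite (C i)) \<Longrightarrow> finite (gridI I C)"
  using bij_betw_finite[OF gridI_bij] finite_PiE by metis

lemma sorted_map_upt: "(\<And>i j. i \<le> j \<Longrightarrow> j < s \<Longrightarrow> f i \<le> f j) \<Longrightarrow> sorted (map f [m..<s])"
  by (auto simp: sorted_iff_nth_mono)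

lemma lower_bound:
  fixes A :: "nat \<Rightarrow> 'a::{finite,field} set"
  assumes ne: "\<And>i. i < s \<Longrightarrow> A i \<noteq> {}"
    and srt: "\<And>i j. i \<le> j \<Longrightarrow> j < s \<Longrightarrow> card (A i) \<le> card (A j)"
  shows "PF {m..<s} D \<phi> \<Longrightarrow> (\<exists>y\<in>gridI {m..<s} A. \<phi> y \<noteq> 0) \<Longrightarrow>
         gb D (map (\<lambda>i. card (A i)) [m..<s]) \<le> card {y\<in>gridI {m..<s} A. \<phi> y \<noteq> 0}"
proof (induction "s - m" arbitrary: m D \<phi>)
  case 0
  then have e: "{m..<s} = {}" "[m..<s] = []" by auto
  have "gridI {} A = {\<lambda>_. 0}" by (auto simp: gridI_def)
  then have "{y\<in>gridI {m..<s} A. \<phi> y \<noteq> 0} = {\<lambda>_. 0}" using 0 e by auto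
  then show ?case using e by simp
next
  case (Suc n)
  have ms: "m < s" using Suc.hyps by simp
  have Ieq: "{m..<s} = insert m {Suc m..<s}" using ms by auto
  have mI: "m \<notin> {Suc m..<s}" by simp
  have Am: "finite (A m)" "A m \<noteq> {}" using ne ms by auto
  define nm where "nm = card (A m)"
  obtain F where F1: "\<And>j. PF {Suc m..<s} (D - j) (F j)" and F2: "\<And>j y. D < j \<Longrightarrow> F j y = 0"
    and F3: "\<And>y. y m \<in> A m \<Longrightarrow> \<phi> y = (\<Sum>j<nm. F j y * y m ^ j)"
  proof -
    have "PF (insert m {Suc m..<s}) D \<phi>" using Suc.prems(1) Ieq by simp
    from PF_decomp[OF this mI finite_atLeastLessThan Am] obtain F where
      F: "(\<forall>j. PF {Suc m..<s} (D - j) (F j))" "(\<forall>j y. D < j \<longrightarrow> F j y = 0)"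
         "(\<forall>y. y m \<in> A m \<longrightarrow> \<phi> y = (\<Sum>j<card (A m). F j y * y m ^ j))" by blast
    show ?thesis by (rule that[of F]) (use F in \<open>auto simp: nm_def\<close>)
  qed
  define G where "G = gridI {Suc m..<s} A"
  have finG: "finite G" unfolding G_def by (rule finite_gridI) auto
  have Find: "F j (y(m := t)) = F j y" for j y t using PF_indep[OF F1 mI] .
  have Gm: "z(m := t) \<in> gridI {m..<s} A" if "z \<in> G" "t \<in> A m" for z t using that ms by (auto simp: G_def gridI_def)
  have Gz: "z m = 0" if "z \<in> G" for z using that by (auto simp: G_def gridI_def)
  obtain y0 where y0: "y0 \<in> gridI {m..<s} A" "\<phi> y0 \<noteq> 0" using Suc.prems(2) by blast
  have y0m: "y0 m \<in> A m" using y0 ms by (auto simp: gridI_def)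
  have "(\<Sum>j<nm. F j y0 * y0 m ^ j) \<noteq> 0" using y0(2) F3[of y0, OF y0m] by simp
  then obtain j0 where j0': "j0 \<in> {..<nm}" "F j0 y0 * y0 m ^ j0 \<noteq> 0"
    using sum.not_neutral_contains_not_neutral by blast
  then have j0: "j0 < nm" "F j0 y0 \<noteq> 0" by auto
  have z0: "y0(m := 0) \<in> G" using y0 by (auto simp: G_def gridI_def)
  define J where "J = {j. j < nm \<and> (\<exists>z\<in>G. F j z \<noteq> 0)}"
  have "F j0 (y0(m := 0)) \<noteq> 0" using j0 Find[of j0 y0 0] by simp
  then have J0: "j0 \<in> J" using j0 z0 unfolding J_def by blast
  have finJ: "finite J" unfolding J_def by auto
  define e where "e = Max J"
  have eJ: "e \<in> J" using finJ J0 unfolding e_def by (intro Max_in) auto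
  have e_lt: "e < nm" and ez: "\<exists>z\<in>G. F e z \<noteq> 0" using eJ by (auto simp: J_def)
  have e_max: "F j z = 0" if "e < j" "j < nm" "z \<in> G" for j z
  proof (rule ccontr)
    assume "F j z \<noteq> 0"
    then have "j \<in> J" using that unfolding J_def by auto
    then have "j \<le> e" unfolding e_def using finJ by simp
    then show False using that by simp
  qed
  have eD: "e \<le> D"
  proof (rule ccontr)
    assume "\<not> e \<le> D"
    then have "F e z = 0" for z using F2 by simp
    then show False using ez by blast
  qed
  define Z where "Z = {z\<in>G. F e z \<noteq> 0}"
  have finZ: "finite Z" using finG by (simp add: Z_def)
  have IH: "gb (D - e) (map (\<lambda>i. card (A i)) [Suc m..<s]) \<le> card Z"
    unfolding Z_def G_def by (rule Suc.hyps(1)) (use Suc.hyps(2) F1 ez in \<open>auto simp: G_def\<close>)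
  define T where "T z = {t\<in>A m. \<phi> (z(m := t)) \<noteq> 0}" for z
  have Tcard: "nm - e \<le> card (T z)" if zZ: "z \<in> Z" for z
  proof -
    have zG: "z \<in> G" and Fez: "F e z \<noteq> 0" using zZ by (auto simp: Z_def)
    have phiz: "\<phi> (z(m := t)) = (\<Sum>j\<le>e. F j z * t ^ j)" if t: "t \<in> A m" for t
    proof -
      have "\<phi> (z(m := t)) = (\<Sum>j<nm. F j z * t ^ j)" using F3[of "z(m := t)"] t Find by simp
      also have "\<dots> = (\<Sum>j\<le>e. F j z * t ^ j)"
        by (rule sum.mono_neutral_right) (use e_lt e_max zG in auto)
      finally show ?thesis .
    qed
    have sub: "{t\<in>A m. \<phi> (z(m := t)) = 0} \<subseteq> {t. (\<Sum>j\<le>e. F j z * t ^ j) = 0}" using phiz by auto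
    have "card {t\<in>A m. \<phi> (z(m := t)) = 0} \<le> card {t. (\<Sum>j\<le>e. F j z * t ^ j) = 0}"
      by (rule card_mono) (simp_all add: sub)
    then have c0: "card {t\<in>A m. \<phi> (z(m := t)) = 0} \<le> e"
      using roots_bound[of "\<lambda>j. F j z" e, OF Fez] by linarith
    have "T z = A m - {t\<in>A m. \<phi> (z(m := t)) = 0}" by (auto simp: T_def)
    then have "card (T z) = nm - card {t\<in>A m. \<phi> (z(m := t)) = 0}"
      using Am(1) by (simp add: card_Diff_subset nm_def)
    then show ?thesis using c0 by simp
  qed
  define h where "h p = (fst p)(m := snd p)" for p :: "(nat \<Rightarrow> 'a) \<times> 'a"
  have hinj: "inj_on h (Sigma Z T)"
  proof (rule inj_onI)
    fix p q assume p: "p \<in> Sigma Z T" and q: "q \<in> Sigma Z T" and eq: "h p = h q"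
    have "h p m = h q m" using eq by simp
    then have "snd p = snd q" unfolding h_def by simp
    moreover have "fst p = fst q"
    proof -
      have "fst p = (h p)(m := 0)" using p Gz unfolding h_def Z_def by (auto simp: fun_eq_iff)
      moreover have "fst q = (h q)(m := 0)" using q Gz unfolding h_def Z_def by (auto simp: fun_eq_iff)
      ultimately show ?thesis using eq by simp
    qed
    ultimately show "p = q" by (simp add: prod_eq_iff)
  qed
  have himg: "h ` Sigma Z T \<subseteq> {y\<in>gridI {m..<s} A. \<phi> y \<noteq> 0}"
    using Gm unfolding h_def T_def Z_def by auto
  have finNZ: "finite {y\<in>gridI {m..<s} A. \<phi> y \<noteq> 0}" using finite_gridI[of "{m..<s}" A] by auto
  have "card Z * (nm - e) \<le> (\<Sum>z\<in>Z. card (T z))"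
    using Tcard sum_bounded_below[of Z "nm - e" "\<lambda>z. card (T z)"] by simp
  also have "\<dots> = card (Sigma Z T)" using finZ by (simp add: T_def)
  also have "\<dots> \<le> card {y\<in>gridI {m..<s} A. \<phi> y \<noteq> 0}" using card_inj_on_le[OF hinj himg finNZ] .
  finally have c1: "card Z * (nm - e) \<le> card {y\<in>gridI {m..<s} A. \<phi> y \<noteq> 0}" .
  have "gb D (map (\<lambda>i. card (A i)) [m..<s]) = gb D (nm # map (\<lambda>i. card (A i)) [Suc m..<s])"
    using ms by (simp add: upt_conv_Cons nm_def)
  also have "\<dots> \<le> (nm - e) * gb (D - e) (map (\<lambda>i. card (A i)) [Suc m..<s])"
  proof (rule gb_step)
    have "sorted (map (\<lambda>i. card (A i)) [m..<s])" by (rule sorted_map_upt) (rule srt)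
    then show "sorted (nm # map (\<lambda>i. card (A i)) [Suc m..<s])" using ms by (simp add: upt_conv_Cons nm_def)
  qed (use eD e_lt in auto)
  also have "\<dots> \<le> (nm - e) * card Z" using IH by simp
  also have "\<dots> \<le> card {y\<in>gridI {m..<s} A. \<phi> y \<noteq> 0}" using c1 by (simp add: mult.commute)
  finally show ?case .
qed


lemma lessThan_insert0: "0 < (s::nat) \<Longrightarrow> {..<s} = insert 0 {1..<s}" by (auto simp: Suc_le_eq)

lemma Lspace_PF:
  assumes f: "f \<in> Lspace s d" and s: "0 < s"
  shows "PF {1..<s} (d - 1) (\<lambda>y. peval s d f (y(0 := 1)))"
proof -
  define S where "S = {a\<in>exps_deg s d. f a \<noteq> 0}"
  have pr: "(\<Prod>i<s. (y(0 := 1)) i ^ a i) = (\<Prod>i\<in>{1..<s}. y i ^ a i)" for y :: "nat \<Rightarrow> 'a" and a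
  proof -
    have "(\<Prod>i<s. (y(0 := 1)) i ^ a i) = (y(0 := 1)) 0 ^ a 0 * (\<Prod>i\<in>{1..<s}. (y(0 := 1)) i ^ a i)"
      unfolding lessThan_insert0[OF s] by (simp add: prod.insert)
    also have "(\<Prod>i\<in>{1..<s}. (y(0 := 1)) i ^ a i) = (\<Prod>i\<in>{1..<s}. y i ^ a i)" by (rule prod.cong) auto
    finally show ?thesis by simp
  qed
  have ev: "peval s d f (y(0 := 1)) = (\<Sum>a\<in>S. f a * (\<Prod>i\<in>{1..<s}. y i ^ a i))" for y
  proof -
    have "peval s d f (y(0 := 1)) = (\<Sum>a\<in>S. f a * (\<Prod>i<s. (y(0 := 1)) i ^ a i))"
      unfolding peval_def S_def by (rule sum.mono_neutral_right) (auto simp: finite_exps_deg)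
    then show ?thesis by (simp only: pr)
  qed
  have bnd: "(\<Sum>i\<in>{1..<s}. a i) \<le> d - 1" if a: "a \<in> S" for a
  proof -
    have "1 \<le> a 0" using a f by (auto simp: S_def Lspace_def)
    moreover have "(\<Sum>i<s. a i) = d" using a by (auto simp: S_def exps_deg_def)
    moreover have "(\<Sum>i<s. a i) = a 0 + (\<Sum>i\<in>{1..<s}. a i)" unfolding lessThan_insert0[OF s] by simp
    ultimately show ?thesis by linarith
  qed
  show ?thesis unfolding PF_def
    by (intro exI[of _ S] exI[of _ f]) (use bnd ev in \<open>auto simp: S_def finite_exps_deg\<close>)
qed

lemma Lspace_x0:
  assumes f: "f \<in> Lspace s d" and s: "0 < s" and x: "x 0 = 0"
  shows "peval s d f x = 0"
  unfolding peval_def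
proof (rule sum.neutral, rule ballI)
  fix a assume "a \<in> exps_deg s d"
  show "f a * (\<Prod>i<s. x i ^ a i) = 0"
  proof (cases "f a = 0")
    case False
    then have "1 \<le> a 0" using f by (auto simp: Lspace_def)
    then have "x 0 ^ a 0 = 0" using x by simp
    then have "(\<Prod>i<s. x i ^ a i) = 0" using s by (subst prod_zero_iff) auto
    then show ?thesis by simp
  qed simp
qed

lemma finite_proj_cart: "finite (proj_cart s (A :: nat \<Rightarrow> 'a::{finite,field} set))"
proof -
  have "proj_cart s A \<subseteq> projpt ` gridI {..<s} A" by (auto simp: proj_cart_def gridI_def)
  moreover have "finite (gridI {..<s} A)" by (rule finite_gridI) auto
  ultimately show ?thesis using finite_subset by blast
qed

lemma zero_count:
  fixes A :: "nat \<Rightarrow> 'a::{finite,field} set"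
  assumes nest: "proj_nested s A" and s: "0 < s" and f: "f \<in> Lspace s d"
  defines "X \<equiv> proj_cart s A" and "G1 \<equiv> gridI {1..<s} A"
  shows "card (zero_set s d X f) + card {y\<in>G1. peval s d f (y(0 := 1)) \<noteq> 0} = card X"
    and "f \<notin> vanishing_ideal_hom s d X \<longleftrightarrow> (\<exists>y\<in>G1. peval s d f (y(0 := 1)) \<noteq> 0)"
    and "card {y\<in>G1. peval s d f (y(0 := 1)) \<noteq> 0} \<le> card X"
proof -
  define h where "h y = projpt (y(0 := 1))" for y :: "nat \<Rightarrow> 'a"
  define \<phi> where "\<phi> y = peval s d f (y(0 := 1))" for y
  have A01: "0 \<in> A i" "1 \<in> A i" if "i < s" for i using nest that by (auto simp: proj_nested_def)
  have A2: "a / b \<in> A j" if "i < j" "j < s" "a \<in> A j" "b \<in> A i" "b \<noteq> 0" for i j a b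
    using nest that unfolding proj_nested_def by blast
  have finX: "finite X" unfolding X_def by (rule finite_proj_cart)
  have finG1: "finite G1" unfolding G1_def by (rule finite_gridI) auto
  define X0 where "X0 = h ` G1"
  have X0X: "X0 \<subseteq> X"
  proof
    fix P assume "P \<in> X0"
    then obtain y where y: "y \<in> G1" "P = h y" by (auto simp: X0_def)
    have "\<forall>i<s. (y(0 := 1)) i \<in> A i" using y(1) A01 by (auto simp: G1_def gridI_def)
    moreover have "\<forall>i\<ge>s. (y(0 := 1)) i = 0" using y(1) s by (auto simp: G1_def gridI_def)
    moreover have "\<exists>i<s. (y(0 := 1)) i \<noteq> 0" using s by (intro exI[of _ 0]) auto
    ultimately show "P \<in> X" unfolding X_def proj_cart_def using y(2) h_def by blast
  qed
  have hinj: "inj_on h G1"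
  proof (rule inj_onI)
    fix y y' assume y: "y \<in> G1" "y' \<in> G1" "h y = h y'"
    have "y'(0 := 1) \<in> projpt (y(0 := 1))" using y(3) projpt_self[of "y'(0 := 1)"] by (simp add: h_def)
    then obtain k where k: "y'(0 := 1) = (\<lambda>i. k * (y(0 := 1)) i)" using projpt_mem by blast
    then have "k = 1" by (metis fun_upd_same mult.right_neutral)
    then have "y'(0 := 1) = y(0 := 1)" using k by (simp add: fun_eq_iff)
    moreover have "y 0 = 0" "y' 0 = 0" using y by (auto simp: G1_def gridI_def)
    ultimately show "y = y'" by (metis fun_upd_triv fun_upd_upd)
  qed
  have cardX0: "card X0 = card G1" unfolding X0_def using hinj by (rule card_image)
  have rest: "\<forall>x\<in>P. x 0 = 0" if P: "P \<in> X" "P \<notin> X0" for P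
  proof -
    obtain x where x: "P = projpt x" "\<forall>i<s. x i \<in> A i" "\<forall>i\<ge>s. x i = 0"
      using P(1) unfolding X_def proj_cart_def by blast
    have x0: "x 0 = 0"
    proof (rule ccontr)
      assume x0: "x 0 \<noteq> 0"
      define y where "y = (\<lambda>i. if i \<in> {1..<s} then x i / x 0 else 0)"
      have "y \<in> G1" unfolding G1_def gridI_def y_def using A2[of 0 _ _ "x 0"] x x0 s by auto
      moreover have "y(0 := 1) = (\<lambda>i. (1 / x 0) * x i)"
        using x(3) x0 by (auto simp: y_def fun_eq_iff)
      then have "h y = P" unfolding h_def using x(1) projpt_scale[of "1 / x 0" x] x0 by simp
      ultimately show False using P(2) unfolding X0_def by blast
    qed
    show ?thesis
    proof
      fix z assume "z \<in> P"
      then obtain k where "z = (\<lambda>i. k * x i)" using x(1) projpt_mem by blast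
      then show "z 0 = 0" using x0 by simp
    qed
  qed
  have zsX0: "h y \<in> zero_set s d X f \<longleftrightarrow> \<phi> y = 0" if y: "y \<in> G1" for y
  proof -
    have "h y \<in> X" using X0X y unfolding X0_def by blast
    then show ?thesis unfolding zero_set_def h_def \<phi>_def using peval_zero_projpt[of "y(0 := 1)" s d f]
      by auto
  qed
  have zs: "zero_set s d X f = (X - X0) \<union> h ` {y\<in>G1. \<phi> y = 0}"
  proof (rule set_eqI)
    fix P show "P \<in> zero_set s d X f \<longleftrightarrow> P \<in> (X - X0) \<union> h ` {y\<in>G1. \<phi> y = 0}"
    proof (cases "P \<in> X0")
      case True
      then obtain y where y: "y \<in> G1" "P = h y" by (auto simp: X0_def)
      have "P \<in> h ` {y\<in>G1. \<phi> y = 0} \<longleftrightarrow> \<phi> y = 0"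
      proof
        assume "P \<in> h ` {y\<in>G1. \<phi> y = 0}"
        then obtain y' where "y' \<in> G1" "\<phi> y' = 0" "P = h y'" by blast
        then show "\<phi> y = 0" using hinj y inj_on_eq_iff by metis
      qed (use y in blast)
      then show ?thesis using zsX0[OF y(1)] y True by auto
    next
      case False
      have "P \<notin> h ` {y\<in>G1. \<phi> y = 0}" using False unfolding X0_def by blast
      moreover have "P \<in> zero_set s d X f \<longleftrightarrow> P \<in> X"
        using rest[of P] False Lspace_x0[OF f s] unfolding zero_set_def by auto
      ultimately show ?thesis using False by auto
    qed
  qed
  have sub1: "h ` {y\<in>G1. \<phi> y = 0} \<subseteq> X0" unfolding X0_def by blast
  have c1: "card (zero_set s d X f) = card (X - X0) + card (h ` {y\<in>G1. \<phi> y = 0})"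
    unfolding zs by (rule card_Un_disjoint) (use finX sub1 finG1 in auto)
  have c2: "card (h ` {y\<in>G1. \<phi> y = 0}) = card {y\<in>G1. \<phi> y = 0}"
    by (rule card_image) (rule inj_on_subset[OF hinj], auto)
  have c3: "card (X - X0) = card X - card X0" using X0X finX by (simp add: card_Diff_subset finite_subset)
  have c4: "card {y\<in>G1. \<phi> y = 0} + card {y\<in>G1. \<phi> y \<noteq> 0} = card G1"
  proof -
    have "card G1 = card ({y\<in>G1. \<phi> y = 0} \<union> {y\<in>G1. \<phi> y \<noteq> 0})" by (rule arg_cong[where f=card]) auto
    also have "\<dots> = card {y\<in>G1. \<phi> y = 0} + card {y\<in>G1. \<phi> y \<noteq> 0}"
      by (rule card_Un_disjoint) (use finG1 in auto)
    finally show ?thesis by simp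
  qed
  have c5: "card X0 \<le> card X" using X0X finX by (rule card_mono[rotated])
  show "card (zero_set s d X f) + card {y\<in>G1. peval s d f (y(0 := 1)) \<noteq> 0} = card X"
    using c1 c2 c3 c4 c5 cardX0 unfolding \<phi>_def by linarith
  show "card {y\<in>G1. peval s d f (y(0 := 1)) \<noteq> 0} \<le> card X"
    using c4 c5 cardX0 unfolding \<phi>_def by linarith
  show "f \<notin> vanishing_ideal_hom s d X \<longleftrightarrow> (\<exists>y\<in>G1. peval s d f (y(0 := 1)) \<noteq> 0)"
  proof
    assume "f \<notin> vanishing_ideal_hom s d X"
    then obtain P where P: "P \<in> X" "\<not> (\<forall>x\<in>P. peval s d f x = 0)"
      using f unfolding vanishing_ideal_hom_def Lspace_def by blast
    then have "P \<in> X0" using rest[of P] Lspace_x0[OF f s] by blast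
    then obtain y where y: "y \<in> G1" "P = h y" by (auto simp: X0_def)
    then show "\<exists>y\<in>G1. peval s d f (y(0 := 1)) \<noteq> 0"
      using P(2) peval_zero_projpt[of "y(0 := 1)" s d f] unfolding h_def by auto
  next
    assume "\<exists>y\<in>G1. peval s d f (y(0 := 1)) \<noteq> 0"
    then obtain y where y: "y \<in> G1" "peval s d f (y(0 := 1)) \<noteq> 0" by blast
    then have "h y \<in> X" using X0X unfolding X0_def by blast
    then show "f \<notin> vanishing_ideal_hom s d X"
      using y projpt_self[of "y(0 := 1)"] unfolding vanishing_ideal_hom_def h_def by blast
  qed
qed


lemma construction:
  fixes A :: "nat \<Rightarrow> 'a::{finite,field} set"
  assumes nest: "proj_nested s A" and ks: "k + 1 < s" and l1: "1 \<le> l" and l2: "l \<le> card (A (k + 1))"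
    and dd: "d = (\<Sum>i\<in>{1..k}. card (A i) - 1) + l"
  shows "\<exists>f\<in>Lspace s d. card {y\<in>gridI {1..<s} A. peval s d f (y(0 := 1)) \<noteq> 0}
           = (card (A (k + 1)) - (l - 1)) * (\<Prod>i\<in>{k + 2..<s}. card (A i))"
proof -
  have A01: "0 \<in> A i" "1 \<in> A i" if "i < s" for i using nest that by (auto simp: proj_nested_def)
  have s0: "0 < s" using ks by simp
  have "l - 1 \<le> card (A (k + 1))" using l2 by simp
  then obtain B where B: "B \<subseteq> A (k + 1)" "card B = l - 1" "finite B"
    by (rule obtain_subset_with_card_n)
  define Sg where "Sg = Sigma {1..k} (\<lambda>i. A i - {0})"
  have cSg: "card Sg = (\<Sum>i\<in>{1..k}. card (A i) - 1)"
    unfolding Sg_def using A01 ks by (simp add: card_Diff_singleton)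
  define \<psi> where "\<psi> x = (\<Prod>p\<in>Sg. lin s (lform (fst p) (snd p) 0) x) * ((\<Prod>b\<in>B. lin s (lform (k + 1) b 0) x) * 1)"
    for x :: "nat \<Rightarrow> 'a"
  have "HP s (0 + card B) (\<lambda>x. (\<Prod>b\<in>B. lin s (lform (k + 1) b 0) x) * 1)"
    by (rule HP_prod[OF HP_one B(3)])
  then have "HP s (0 + card B + card Sg) \<psi>"
    unfolding \<psi>_def by (rule HP_prod) (auto simp: Sg_def)
  then have "HL s (Suc (0 + card B + card Sg)) (\<lambda>x. x 0 * \<psi> x)" by (rule HL_x0[OF s0])
  moreover have "Suc (0 + card B + card Sg) = d" using B(2) cSg dd l1 by simp
  ultimately obtain f where f: "f \<in> Lspace s d" "\<And>x. x 0 * \<psi> x = peval s d f x"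
    unfolding HL_def by auto
  define G1 where "G1 = gridI {1..<s} A"
  define C where "C i = (if i \<le> k then {0} else if i = k + 1 then A (k + 1) - B else A i)" for i
  have val: "peval s d f (y(0 := 1)) = (\<Prod>p\<in>Sg. y (fst p) - snd p) * (\<Prod>b\<in>B. y (k + 1) - b)" for y
  proof -
    have "(\<Prod>p\<in>Sg. lin s (lform (fst p) (snd p) 0) (y(0 := 1))) = (\<Prod>p\<in>Sg. y (fst p) - snd p)"
      by (rule prod.cong) (use ks in \<open>auto simp: Sg_def lin_lform\<close>)
    moreover have "(\<Prod>b\<in>B. lin s (lform (k + 1) b 0) (y(0 := 1))) = (\<Prod>b\<in>B. y (k + 1) - b)"
      by (rule prod.cong) (use ks in \<open>auto simp: lin_lform\<close>)
    ultimately show ?thesis using f(2)[of "y(0 := 1)", symmetric] unfolding \<psi>_def by simp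
  qed
  have NZ: "{y\<in>G1. peval s d f (y(0 := 1)) \<noteq> 0} = gridI {1..<s} C"
  proof (rule set_eqI)
    fix y
    have "y \<in> G1 \<and> peval s d f (y(0 := 1)) \<noteq> 0 \<longleftrightarrow>
          y \<in> G1 \<and> (\<forall>p\<in>Sg. y (fst p) \<noteq> snd p) \<and> (\<forall>b\<in>B. y (k + 1) \<noteq> b)"
      unfolding val using B(3) by (auto simp: prod_zero_iff Sg_def)
    also have "\<dots> \<longleftrightarrow> y \<in> gridI {1..<s} C"
    proof
      assume h: "y \<in> G1 \<and> (\<forall>p\<in>Sg. y (fst p) \<noteq> snd p) \<and> (\<forall>b\<in>B. y (k + 1) \<noteq> b)"
      have "y i \<in> C i" if "i \<in> {1..<s}" for i
      proof (cases "i \<le> k")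
        case True
        have "y i \<in> A i" using h that by (auto simp: G1_def gridI_def)
        moreover have "y i \<notin> A i - {0}"
        proof
          assume "y i \<in> A i - {0}"
          then have "(i, y i) \<in> Sg" using that True by (auto simp: Sg_def)
          then show False using h by auto
        qed
        ultimately show ?thesis using True by (simp add: C_def)
      next
        case False
        then show ?thesis using h that by (auto simp: G1_def gridI_def C_def)
      qed
      then show "y \<in> gridI {1..<s} C" using h by (auto simp: G1_def gridI_def)
    next
      assume h: "y \<in> gridI {1..<s} C"
      have "y \<in> G1"
      proof -
        have "y i \<in> A i" if i: "i \<in> {1..<s}" for i
        proof -
          have yi: "y i \<in> C i" using h i unfolding gridI_def by blast
          show ?thesis
          proof (cases "i \<le> k")
            case True then show ?thesis using yi A01[of i] i by (simp add: C_def)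
          next
            case False then show ?thesis using yi by (auto simp: C_def split: if_splits)
          qed
        qed
        then show ?thesis using h by (auto simp: G1_def gridI_def)
      qed
      moreover have "\<forall>p\<in>Sg. y (fst p) \<noteq> snd p"
      proof
        fix p assume "p \<in> Sg"
        then have "fst p \<in> {1..<s}" "fst p \<le> k" "snd p \<noteq> 0" using ks by (auto simp: Sg_def)
        then have "y (fst p) \<in> C (fst p)" using h unfolding gridI_def by blast
        then have "y (fst p) = 0" using \<open>fst p \<le> k\<close> by (simp add: C_def)
        then show "y (fst p) \<noteq> snd p" using \<open>snd p \<noteq> 0\<close> by simp
      qed
      moreover have "\<forall>b\<in>B. y (k + 1) \<noteq> b"
      proof -
        have "k + 1 \<in> {1..<s}" using ks by simp
        then have "y (k + 1) \<in> C (k + 1)" using h unfolding gridI_def by blast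
        then have "y (k + 1) \<notin> B" by (simp add: C_def)
        then show ?thesis by blast
      qed
      ultimately show "y \<in> G1 \<and> (\<forall>p\<in>Sg. y (fst p) \<noteq> snd p) \<and> (\<forall>b\<in>B. y (k + 1) \<noteq> b)" by blast
    qed
    finally show "y \<in> {y\<in>G1. peval s d f (y(0 := 1)) \<noteq> 0} \<longleftrightarrow> y \<in> gridI {1..<s} C" by simp
  qed
  have "card (gridI {1..<s} C) = (\<Prod>i\<in>{1..<s}. card (C i))" by (rule card_gridI) simp
  also have "\<dots> = (\<Prod>i\<in>{1..<k + 1}. card (C i)) * (\<Prod>i\<in>{k + 1..<s}. card (C i))"
    using ks by (subst prod.atLeastLessThan_concat) auto
  also have "(\<Prod>i\<in>{1..<k + 1}. card (C i)) = 1" by (rule prod.neutral) (auto simp: C_def)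
  also have "(\<Prod>i\<in>{k + 1..<s}. card (C i)) = card (C (k + 1)) * (\<Prod>i\<in>{k + 2..<s}. card (C i))"
    using ks by (subst prod.atLeast_Suc_lessThan) auto
  also have "(\<Prod>i\<in>{k + 2..<s}. card (C i)) = (\<Prod>i\<in>{k + 2..<s}. card (A i))"
    by (rule prod.cong) (auto simp: C_def)
  also have "card (C (k + 1)) = card (A (k + 1)) - (l - 1)"
    using B by (simp add: C_def card_Diff_subset)
  finally have "card (gridI {1..<s} C) = (card (A (k + 1)) - (l - 1)) * (\<Prod>i\<in>{k + 2..<s}. card (A i))" by simp
  then have "card {y\<in>G1. peval s d f (y(0 := 1)) \<noteq> 0} = (card (A (k + 1)) - (l - 1)) * (\<Prod>i\<in>{k + 2..<s}. card (A i))"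
    by (simp only: NZ)
  then show ?thesis unfolding G1_def by (intro bexI[OF _ f(1)])
qed

theorem corollary6p9:
  fixes A :: "nat \<Rightarrow> 'a::{finite,field} set" and s d k l :: nat
  assumes "proj_nested s A"
    and "1 \<le> d" and "d \<le> (\<Sum>i\<in>{1..<s}. card (A i) - 1)"
    and "k \<le> s - 2"
    and "d = (\<Sum>i\<in>{1..k}. card (A i) - 1) + l"
    and "1 \<le> l" and "l \<le> card (A (k + 1)) - 1"
  shows "real (Max {card (zero_set s d (proj_cart s A) f) | f.
                 f \<in> Lspace s d \<and> f \<notin> vanishing_ideal_hom s d (proj_cart s A)})
       = hdeg (hilbert_fn s (proj_cart s A))
         - real ((card (A (k + 1)) - l + 1) * (\<Prod>i\<in>{k + 2..<s}. card (A i)))"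
proof -
  note nest = assms(1)
  define X where "X = proj_cart s A"
  have A01: "0 \<in> A i" "1 \<in> A i" if "i < s" for i using nest that by (auto simp: proj_nested_def)
  have ne: "A i \<noteq> {}" if "i < s" for i using A01[OF that] by blast
  have srt: "card (A i) \<le> card (A j)" if "i \<le> j" "j < s" for i j using nest that by (auto simp: proj_nested_def)
  have cardA1: "1 \<le> card (A i)" if "i < s" for i using ne[OF that] by (simp add: card_gt_0_iff Suc_le_eq)
  have s2: "2 \<le> s"
  proof (rule ccontr)
    assume "\<not> 2 \<le> s"
    then have "{1..<s} = {}" by auto
    then show False using assms(2,3) by simp
  qed
  have s0: "0 < s" using s2 by simp
  have ks: "k + 1 < s" using assms(4) s2 by arith
  have l2: "l \<le> card (A (k + 1))" using assms(7) by simp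
  define \<delta> where "\<delta> = (card (A (k + 1)) - l + 1) * (\<Prod>i\<in>{k + 2..<s}. card (A i))"
  have \<delta>': "\<delta> = (card (A (k + 1)) - (l - 1)) * (\<Prod>i\<in>{k + 2..<s}. card (A i))"
    unfolding \<delta>_def using assms(6) l2 by (simp add: Suc_diff_le)
  have \<delta>pos: "0 < \<delta>"
  proof -
    have "0 < card (A (k + 1)) - l + 1" by simp
    moreover have "0 < (\<Prod>i\<in>{k + 2..<s}. card (A i))"
      by (rule prod_pos) (use cardA1 in \<open>auto simp: Suc_le_eq\<close>)
    ultimately show ?thesis unfolding \<delta>_def by simp
  qed
  have gbd: "gb (d - 1) (map (\<lambda>i. card (A i)) [1..<s]) = \<delta>"
  proof -
    have "gb (d - 1) (map (\<lambda>i. card (A i)) [1..<s]) = (card (A (1 + k)) - (l - 1)) * (\<Prod>i\<in>{1 + k + 1..<s}. card (A i))"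
    proof (rule gb_closed)
      show "\<forall>i. 1 \<le> i \<and> i < s \<longrightarrow> 1 \<le> card (A i)" using cardA1 by blast
      show "1 + k < s" using ks by simp
      show "l - 1 < card (A (1 + k))" using assms(6,7) by simp
      have "{1..<1 + k} = {1..k}" by auto
      then show "d - 1 = (\<Sum>i\<in>{1..<1 + k}. card (A i) - 1) + (l - 1)" using assms(5,6) by simp
    qed
    then show ?thesis unfolding \<delta>' by (simp add: add.commute)
  qed
  have upper: "card (zero_set s d X f) \<le> card X - \<delta>"
    if f: "f \<in> Lspace s d" "f \<notin> vanishing_ideal_hom s d X" for f
  proof -
    note zc = zero_count[OF nest s0 f(1)]
    have nzex: "\<exists>y\<in>gridI {1..<s} A. peval s d f (y(0 := 1)) \<noteq> 0" using zc(2) f(2) unfolding X_def by blast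
    have "gb (d - 1) (map (\<lambda>i. card (A i)) [1..<s]) \<le> card {y\<in>gridI {1..<s} A. peval s d f (y(0 := 1)) \<noteq> 0}"
      by (rule lower_bound[OF ne srt Lspace_PF[OF f(1) s0] nzex])
    then show ?thesis using zc(1) gbd unfolding X_def by linarith
  qed
  obtain f0 where f0: "f0 \<in> Lspace s d"
    "card {y\<in>gridI {1..<s} A. peval s d f0 (y(0 := 1)) \<noteq> 0} = \<delta>"
    using construction[OF nest ks assms(6) l2 assms(5)] \<delta>' by blast
  note zc0 = zero_count[OF nest s0 f0(1)]
  have f0I: "f0 \<notin> vanishing_ideal_hom s d X"
  proof -
    have "{y\<in>gridI {1..<s} A. peval s d f0 (y(0 := 1)) \<noteq> 0} \<noteq> {}"
    proof
      assume "{y\<in>gridI {1..<s} A. peval s d f0 (y(0 := 1)) \<noteq> 0} = {}"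
      then have "card {y\<in>gridI {1..<s} A. peval s d f0 (y(0 := 1)) \<noteq> 0} = 0" by (simp only: card.empty)
      then show False using f0(2) \<delta>pos by simp
    qed
    then show ?thesis using zc0(2) unfolding X_def by blast
  qed
  have \<delta>X: "\<delta> \<le> card X" using zc0(3) f0(2) unfolding X_def by simp
  have z0: "card (zero_set s d X f0) = card X - \<delta>" using zc0(1) f0(2) unfolding X_def by simp
  define Z where "Z = {card (zero_set s d X f) | f. f \<in> Lspace s d \<and> f \<notin> vanishing_ideal_hom s d X}"
  have finZ: "finite Z"
  proof (rule finite_subset)
    show "Z \<subseteq> {..card X}" unfolding Z_def using upper by force
  qed simp
  have maxZ: "Max Z = card X - \<delta>"
  proof (rule Max_eqI[OF finZ])
    show "y \<le> card X - \<delta>" if "y \<in> Z" for y using that upper unfolding Z_def by blast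
    show "card X - \<delta> \<in> Z" unfolding Z_def using f0(1) f0I z0 by (intro CollectI exI[of _ f0]) auto
  qed
  have XP: "\<exists>x. P = projpt x \<and> (\<forall>i\<ge>s. x i = 0) \<and> (\<exists>i<s. x i \<noteq> 0)" if "P \<in> X" for P
    using that unfolding X_def proj_cart_def by blast
  have hf: "hilbert_fn s X d' = card X" if "Suc ((s - 1) * (CARD('a) - 1)) \<le> d'" for d'
  proof -
    have "(s - 1) * (CARD('a) - 1) < d'" using that by simp
    from hilbert_dim[OF _ XP this] have "VS.dim (hpolys s d' :: ((nat \<Rightarrow> nat) \<Rightarrow> 'a) set) = VS.dim (vanishing_ideal_hom s d' X) + card X"
      unfolding X_def using finite_proj_cart by blast
    then show ?thesis unfolding hilbert_fn_def by simp
  qed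
  have "hdeg (hilbert_fn s X) = real (card X)"
  proof (rule hdeg_const)
    show "eventually (\<lambda>d'. hilbert_fn s X d' = card X) sequentially"
      by (rule eventually_sequentiallyI[of "Suc ((s - 1) * (CARD('a) - 1))"]) (rule hf)
    show "0 < card X" using \<delta>pos \<delta>X by simp
  qed
  then show ?thesis using maxZ \<delta>X unfolding Z_def X_def \<delta>_def[symmetric] by (simp add: of_nat_diff)
qed


end
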